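(* Let $n,q,m\ge1$ and let $S=\{v_1,\dots,v_m\}\subset\mathbb Z^n$ consist of distinct vectors satisfying: (1) $\sum_jn_jv_j\ne0$ for all $n_j\in\mathbb Z$ with $\sum_jn_j=0$ and $1<\sum_j|n_j|\le 2q+2$; (2) $|\sum_jn_jv_j|^2-\sum_jn_j|v_j|^2\ne0$ for all $n_j\in\mathbb Z$ with $\sum_jn_j=1$ and $1<\sum_j|n_j|\le2q+1$; (3) $\pi(u)\ne0$ whenever $u\in\mathbb Z^m$ is an element of $X_q$ or the sum or the difference of two distinct elements of $X_q$; (4) $2\sum_j\ell_j|v_j|^2+|\sum_j\ell_jv_j|^2\ne0$ for all $\ell\in X_q^{-2}$. Substitute into $H_{\rm Res}$ (restricted to $\{u_k=0,\ k\notin\mathrm{Span}(S)\}$) $u_k=z_k$ for $k\in S^c$ and $u_{v_i}=\sqrt{\xi_i+y_i}\,e^{ix_i}$, and expand in powers of $y,w$ (with $y$ of degree 2, $w=(z,\bar z)$ of degree 1, $x$ of degree 0). Then the sum of all terms of degree $\le2$ in $(y,w)$ equals $$\mathrm{const}(\xi)+(q+1)^2A_q(\xi)\Big(\sum_iy_i+\sum_{k\in S^c}|z_k|^2\Big)+N,$$ where $$N=(\omega(\xi),y)+\sum_{k\in S^c}|k|^2|z_k|^2+\mathcal Q(x,w),\qquad \omega(\xi)=\omega_0+\nabla_\xi A_{q+1}(\xi)-(q+1)^2A_q(\xi)\underline1,$$ $\omega_0=(|v_1|^2,\dots,|v_m|^2)$, $\underline1=(1,\dots,1)$, and $$\mathcal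 Q=\sum_{\ell\in X_q^0}c(\ell)e^{i(\ell,x)}\sum_{(h,k)\in\mathcal P_\ell}z_h\bar z_k+\sum_{\ell\in X_q^{-2}}c(\ell)\sum_{\{h,k\}\in\mathcal P_\ell}\big[e^{i(\ell,x)}z_hz_k+e^{-i(\ell,x)}\bar z_h\bar z_k\big],$$ where, writing $\ell=\ell^+-\ell^-$ with $\ell^\pm\in\mathbb N^m$ of disjoint supports and using multi-index notation, $$c(\ell)=(q+1)^2\xi^{\frac{\ell^++\ell^-}{2}}\sum_{\alpha\in\mathbb N^m,\ |\alpha+\ell^+|_1=q}\binom{q}{\ell^++\alpha}\binom{q}{\ell^-+\alpha}\xi^\alpha\quad(\ell\in X_q^0),$$ $$c(\ell)=(q+1)q\,\xi^{\frac{\ell^++\ell^-}{2}}\sum_{\alpha\in\mathbb N^m,\ |\alpha+\ell^+|_1=q-1}\binom{q+1}{\ell^-+\alpha}\binom{q-1}{\ell^++\alpha}\xi^\alpha\quad(\ell\in X_q^{-2}).$$ In particular, all terms of degree exactly $1$ in $w$ vanish (so $S$ is complete).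
   Context: Setting: $H_{\rm Res}=\sum_{k\in\mathbb Z^n}|k|^2u_k\bar u_k+\sum\binom{q+1}{\alpha}\binom{q+1}{\beta}u^\alpha\bar u^\beta$, the second sum over multi-indices $\alpha,\beta:\mathbb Z^n\to\mathbb N$ with $|\alpha|=|\beta|=q+1$, $\sum_k(\alpha_k-\beta_k)k=0$ and $\sum_k(\alpha_k-\beta_k)|k|^2=0$; $\binom{q+1}{\alpha}$ is the multinomial coefficient and $u^\alpha=\prod_ku_k^{\alpha_k}$. $S^c=\mathrm{Span}(S)\setminus S$, with $\mathrm{Span}(S)$ the subgroup of $\mathbb Z^n$ generated by $S$. $A_r(\xi)=\sum_{k\in\mathbb N^m,\ \sum k_i=r}\binom{r}{k_1,\dots,k_m}^2\prod_i\xi_i^{k_i}$. $e_1,\dots,e_m$ standard basis of $\mathbb Z^m$; $\eta(\sum a_ie_i)=\sum a_i$; $\pi:\mathbb Z^m\to\mathbb Z^n$, $\pi(e_i)=v_i$. $X_q$ is the set of $\ell=\sum_{j=1}^{2q}\epsilon_je_{i_j}$ ($\epsilon_j=\pm1$, repetitions allowed) with $\ell\ne0$, $\ell\ne-2e_i$ for all $i$, $\eta(\ell)\in\{0,-2\}$; $X_q^0$, $X_q^{-2}$ are the parts with $\eta=0$, $\eta=-2$. For $\ell\in X_q^0$, $\mathcal P_\ell$ is the set of ordered pairs $(h,k)\in S^c\times S^c$ with $\sum_j\ell_jv_j+h-k=0$ and $\sum_j\ell_j|v_j|^2+|h|^2-|k|^2=0$; for $\ell\in X_q^{-2}$, $\mathcal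 P_\ell$ is the set of unordered pairs $\{h,k\}\subset S^c$ with $\sum_j\ell_jv_j+h+k=0$ and $\sum_j\ell_j|v_j|^2+|h|^2+|k|^2=0$. Here $\xi_i>0$ are parameters, $x\in\mathbb T^m$, $y\in\mathbb C^m$ small. *)

theory Defs
  imports "HOL-Analysis.Analysis"
begin

definition nsq :: "int^'n \<Rightarrow> int" where
  "nsq k = (\<Sum>j\<in>UNIV. (k$j)^2)"

definition multinom :: "nat \<Rightarrow> ('a \<Rightarrow> nat) \<Rightarrow> nat" where
  "multinom r k = fact r div (\<Prod>i\<in>{i. k i \<noteq> 0}. fact (k i))"

definition piZ :: "('m::finite \<Rightarrow> int^'n) \<Rightarrow> ('m \<Rightarrow> int) \<Rightarrow> int^'n" where
  "piZ v l = (\<Sum>i\<in>UNIV. l i *s v i)"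

definition spanS :: "('m::finite \<Rightarrow> int^'n) \<Rightarrow> (int^'n) set" where
  "spanS v = {piZ v c | c. True}"

definition Sc :: "('m::finite \<Rightarrow> int^'n) \<Rightarrow> (int^'n) set" where
  "Sc v = spanS v - range v"

definition eta :: "('m::finite \<Rightarrow> int) \<Rightarrow> int" where
  "eta l = (\<Sum>i\<in>UNIV. l i)"

definition Xq :: "nat \<Rightarrow> ('m::finite \<Rightarrow> int) set" where
  "Xq q = {l. (\<exists>idx::nat \<Rightarrow> 'm. \<exists>sg::nat \<Rightarrow> int.
              (\<forall>j<2*q. sg j = 1 \<or> sg j = -1) \<and>
              l = (\<lambda>i. \<Sum>j<2*q. if idx j = i then sg j else 0))
          \<and> l \<noteq> (\<lambda>i. 0)
          \<and> (\<forall>i. l \<noteq> (\<lambda>j. if j = i then -2 else 0))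
          \<and> (eta l = 0 \<or> eta l = -2)}"

definition Xq0 :: "nat \<Rightarrow> ('m::finite \<Rightarrow> int) set" where
  "Xq0 q = {l \<in> Xq q. eta l = 0}"

definition Xq2 :: "nat \<Rightarrow> ('m::finite \<Rightarrow> int) set" where
  "Xq2 q = {l \<in> Xq q. eta l = -2}"

definition wsq :: "('m::finite \<Rightarrow> int^'n) \<Rightarrow> ('m \<Rightarrow> int) \<Rightarrow> int" where
  "wsq v l = (\<Sum>j\<in>UNIV. l j * nsq (v j))"

definition P0 :: "('m::finite \<Rightarrow> int^'n) \<Rightarrow> ('m \<Rightarrow> int) \<Rightarrow> ((int^'n) \<times> (int^'n)) set" where
  "P0 v l = {(h,k). h \<in> Sc v \<and> k \<in> Sc v \<and> piZ v l + h - k = 0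
                  \<and> wsq v l + nsq h - nsq k = 0}"

text \<open>P_l for l in X_q^-2: unordered pairs {h,k} (h = k is impossible under hypothesis (4)).\<close>
definition P2 :: "('m::finite \<Rightarrow> int^'n) \<Rightarrow> ('m \<Rightarrow> int) \<Rightarrow> (int^'n) set set" where
  "P2 v l = {{h,k} | h k. h \<in> Sc v \<and> k \<in> Sc v \<and> h \<noteq> k \<and> piZ v l + h + k = 0
                  \<and> wsq v l + nsq h + nsq k = 0}"

definition Apoly :: "nat \<Rightarrow> ('m::finite \<Rightarrow> real) \<Rightarrow> real" where
  "Apoly r xi = (\<Sum>k\<in>{k::'m \<Rightarrow> nat. (\<Sum>i\<in>UNIV. k i) = r}.
                   (real (multinom r k))^2 * (\<Prod>i\<in>UNIV. xi i ^ k i))"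

definition posp :: "('m \<Rightarrow> int) \<Rightarrow> 'm \<Rightarrow> nat" where "posp l = (\<lambda>i. nat (l i))"
definition negp :: "('m \<Rightarrow> int) \<Rightarrow> 'm \<Rightarrow> nat" where "negp l = (\<lambda>i. nat (- l i))"

definition xihalf :: "('m::finite \<Rightarrow> real) \<Rightarrow> ('m \<Rightarrow> int) \<Rightarrow> real" where
  "xihalf xi l = (\<Prod>i\<in>UNIV. xi i powr (real (posp l i + negp l i) / 2))"

definition c0 :: "nat \<Rightarrow> ('m::finite \<Rightarrow> real) \<Rightarrow> ('m \<Rightarrow> int) \<Rightarrow> real" where
  "c0 q xi l = real ((q+1)^2) * xihalf xi l *
     (\<Sum>a\<in>{a::'m \<Rightarrow> nat. (\<Sum>i\<in>UNIV. a i + posp l i) = q}.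
        real (multinom q (\<lambda>i. posp l i + a i)) * real (multinom q (\<lambda>i. negp l i + a i))
        * (\<Prod>i\<in>UNIV. xi i ^ a i))"

definition c2 :: "nat \<Rightarrow> ('m::finite \<Rightarrow> real) \<Rightarrow> ('m \<Rightarrow> int) \<Rightarrow> real" where
  "c2 q xi l = real ((q+1)*q) * xihalf xi l *
     (\<Sum>a\<in>{a::'m \<Rightarrow> nat. (\<Sum>i\<in>UNIV. a i + posp l i) = q - 1}.
        real (multinom (q+1) (\<lambda>i. negp l i + a i)) * real (multinom (q-1) (\<lambda>i. posp l i + a i))
        * (\<Prod>i\<in>UNIV. xi i ^ a i))"

definition omega :: "nat \<Rightarrow> ('m::finite \<Rightarrow> int^'n) \<Rightarrow> ('m \<Rightarrow> real) \<Rightarrow> 'm \<Rightarrow> real" where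
  "omega q v xi i = real_of_int (nsq (v i)) + deriv (\<lambda>t. Apoly (q+1) (xi(i := t))) (xi i)
                    - real ((q+1)^2) * Apoly q xi"

definition RM :: "nat \<Rightarrow> (int^'n) set \<Rightarrow> (((int^'n) \<Rightarrow> nat) \<times> ((int^'n) \<Rightarrow> nat)) set" where
  "RM q F = {(a,b). (\<forall>k. k \<notin> F \<longrightarrow> a k = 0) \<and> (\<forall>k. k \<notin> F \<longrightarrow> b k = 0)
              \<and> sum a F = q+1 \<and> sum b F = q+1
              \<and> (\<Sum>k\<in>F. (int (a k) - int (b k)) *s k) = 0
              \<and> (\<Sum>k\<in>F. (int (a k) - int (b k)) * nsq k) = 0}"

text \<open>H_Res evaluated at (u, ubar) with u_k = ubar_k = 0 outside the finite set F;
  u and ubar are treated as independent variables.\<close>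
definition Hres :: "nat \<Rightarrow> (int^'n) set \<Rightarrow> (int^'n \<Rightarrow> complex) \<Rightarrow> (int^'n \<Rightarrow> complex) \<Rightarrow> complex" where
  "Hres q F u ub = (\<Sum>k\<in>F. of_int (nsq k) * u k * ub k)
     + (\<Sum>(a,b)\<in>RM q F. of_nat (multinom (q+1) a * multinom (q+1) b)
           * (\<Prod>k\<in>F. u k ^ a k) * (\<Prod>k\<in>F. ub k ^ b k))"

text \<open>The substitution, with scaling parameter e: y -> e^2 y, w -> e w.\<close>
definition usub :: "('m::finite \<Rightarrow> int^'n) \<Rightarrow> ('m \<Rightarrow> real) \<Rightarrow> ('m \<Rightarrow> real) \<Rightarrow> ('m \<Rightarrow> complex)
                    \<Rightarrow> (int^'n \<Rightarrow> complex) \<Rightarrow> complex \<Rightarrow> int^'n \<Rightarrow> complex" where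
  "usub v xi x y z e k = (if k \<in> range v
      then csqrt (of_real (xi (inv v k)) + e^2 * y (inv v k)) * cis (x (inv v k))
      else e * z k)"

definition ubsub :: "('m::finite \<Rightarrow> int^'n) \<Rightarrow> ('m \<Rightarrow> real) \<Rightarrow> ('m \<Rightarrow> real) \<Rightarrow> ('m \<Rightarrow> complex)
                    \<Rightarrow> (int^'n \<Rightarrow> complex) \<Rightarrow> complex \<Rightarrow> int^'n \<Rightarrow> complex" where
  "ubsub v xi x y z e k = (if k \<in> range v
      then csqrt (of_real (xi (inv v k)) + e^2 * y (inv v k)) * cis (- x (inv v k))
      else e * cnj (z k))"

definition Hsub :: "nat \<Rightarrow> ('m::finite \<Rightarrow> int^'n) \<Rightarrow> ('m \<Rightarrow> real) \<Rightarrow> ('m \<Rightarrow> real) \<Rightarrow> ('m \<Rightarrow> complex)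
                    \<Rightarrow> (int^'n \<Rightarrow> complex) \<Rightarrow> complex \<Rightarrow> complex" where
  "Hsub q v xi x y z e = Hres q (range v \<union> {k. z k \<noteq> 0}) (usub v xi x y z e) (ubsub v xi x y z e)"

definition lx :: "('m::finite \<Rightarrow> int) \<Rightarrow> ('m \<Rightarrow> real) \<Rightarrow> real" where
  "lx l x = (\<Sum>i\<in>UNIV. real_of_int (l i) * x i)"

text \<open>The quadratic form Q(x,w); sums over P_l restricted to the (finite) support of z,
  outside of which all terms vanish.\<close>
definition Qform :: "nat \<Rightarrow> ('m::finite \<Rightarrow> int^'n) \<Rightarrow> ('m \<Rightarrow> real) \<Rightarrow> ('m \<Rightarrow> real)
                      \<Rightarrow> (int^'n \<Rightarrow> complex) \<Rightarrow> complex" where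
  "Qform q v xi x z =
     (\<Sum>l\<in>Xq0 q. of_real (c0 q xi l) * cis (lx l x) *
        (\<Sum>(h,k)\<in>P0 v l \<inter> ({k. z k \<noteq> 0} \<times> {k. z k \<noteq> 0}). z h * cnj (z k)))
   + (\<Sum>l\<in>Xq2 q. of_real (c2 q xi l) *
        (\<Sum>p\<in>{p\<in>P2 v l. p \<subseteq> {k. z k \<noteq> 0}}.
            cis (lx l x) * (\<Prod>h\<in>p. z h) + cis (- lx l x) * (\<Prod>h\<in>p. cnj (z h))))"

end

theory Submission
  imports Defs
begin

definition D2 :: "(complex \<Rightarrow> complex) \<Rightarrow> complex \<Rightarrow> complex \<Rightarrow> complex \<Rightarrow> bool" where
"D2 f a0 a1 a2 \<longleftrightarrow> (\<exists>g1 g2 r. r > 0 \<and> (\<forall>e. norm e < r \<longrightarrow> (f has_field_derivative g1 e) (at e)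
    \<and> (g1 has_field_derivative g2 e) (at e)) \<and> f 0 = a0 \<and> g1 0 = a1 \<and> g2 0 = a2)"

lemma D2_deriv:
  assumes "D2 f a0 a1 a2"
  shows "f 0 = a0" "deriv f 0 = a1" "(deriv ^^ 2) f 0 = a2"
proof -
  obtain g1 g2 r where r: "r > 0" and d: "\<And>e. norm e < r \<Longrightarrow> (f has_field_derivative g1 e) (at e)
    \<and> (g1 has_field_derivative g2 e) (at e)" and v: "f 0 = a0" "g1 0 = a1" "g2 0 = a2"
    using assms unfolding D2_def by blast
  show "f 0 = a0" by fact
  show "deriv f 0 = a1" using d[of 0] r v by (simp add: DERIV_imp_deriv)
  have ev: "eventually (\<lambda>e. deriv f e = g1 e) (nhds 0)"
    unfolding eventually_nhds
    by (rule exI[of _ "ball 0 r"]) (use r d in \<open>auto simp: DERIV_imp_deriv dist_norm\<close>)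
  have "(deriv ^^ 2) f 0 = deriv (deriv f) 0" by (simp add: numeral_2_eq_2)
  also have "\<dots> = deriv g1 0" by (rule deriv_cong_ev[OF ev refl])
  also have "\<dots> = a2" using d[of 0] r v by (simp add: DERIV_imp_deriv)
  finally show "(deriv ^^ 2) f 0 = a2" .
qed

lemma D2_const: "D2 (\<lambda>_. c) c 0 0"
  unfolding D2_def by (rule exI[of _ "\<lambda>_. 0"], rule exI[of _ "\<lambda>_. 0"], rule exI[of _ 1]) auto

lemma D2_id: "D2 (\<lambda>e. e) 0 1 0"
  unfolding D2_def by (rule exI[of _ "\<lambda>_. 1"], rule exI[of _ "\<lambda>_. 0"], rule exI[of _ 1]) auto

lemma D2_add:
  assumes "D2 f a0 a1 a2" "D2 g b0 b1 b2"
  shows "D2 (\<lambda>e. f e + g e) (a0+b0) (a1+b1) (a2+b2)"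
proof -
  obtain f1 f2 r where r: "r > 0" and d: "\<And>e. norm e < r \<Longrightarrow> (f has_field_derivative f1 e) (at e)
    \<and> (f1 has_field_derivative f2 e) (at e)" and v: "f 0 = a0" "f1 0 = a1" "f2 0 = a2"
    using assms(1) unfolding D2_def by blast
  obtain g1 g2 s where s: "s > 0" and d2: "\<And>e. norm e < s \<Longrightarrow> (g has_field_derivative g1 e) (at e)
    \<and> (g1 has_field_derivative g2 e) (at e)" and w: "g 0 = b0" "g1 0 = b1" "g2 0 = b2"
    using assms(2) unfolding D2_def by blast
  show ?thesis unfolding D2_def
    apply (rule exI[of _ "\<lambda>e. f1 e + g1 e"], rule exI[of _ "\<lambda>e. f2 e + g2 e"], rule exI[of _ "min r s"])
    using r s d d2 v w by (auto intro!: derivative_eq_intros)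
qed

lemma D2_mult:
  assumes "D2 f a0 a1 a2" "D2 g b0 b1 b2"
  shows "D2 (\<lambda>e. f e * g e) (a0*b0) (a1*b0 + a0*b1) (a2*b0 + 2*a1*b1 + a0*b2)"
proof -
  obtain f1 f2 r where r: "r > 0" and d: "\<And>e. norm e < r \<Longrightarrow> (f has_field_derivative f1 e) (at e)
    \<and> (f1 has_field_derivative f2 e) (at e)" and v: "f 0 = a0" "f1 0 = a1" "f2 0 = a2"
    using assms(1) unfolding D2_def by blast
  obtain g1 g2 s where s: "s > 0" and d2: "\<And>e. norm e < s \<Longrightarrow> (g has_field_derivative g1 e) (at e)
    \<and> (g1 has_field_derivative g2 e) (at e)" and w: "g 0 = b0" "g1 0 = b1" "g2 0 = b2"
    using assms(2) unfolding D2_def by blast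
  show ?thesis unfolding D2_def
    apply (rule exI[of _ "\<lambda>e. f1 e * g e + f e * g1 e"], rule exI[of _ "\<lambda>e. f2 e * g e + 2 * f1 e * g1 e + f e * g2 e"], rule exI[of _ "min r s"])
    using r s d d2 v w by (auto intro!: derivative_eq_intros simp: algebra_simps)
qed

lemma D2_sum:
  assumes "finite I" "\<And>i. i \<in> I \<Longrightarrow> D2 (f i) (a0 i) (a1 i) (a2 i)"
  shows "D2 (\<lambda>e. \<Sum>i\<in>I. f i e) (\<Sum>i\<in>I. a0 i) (\<Sum>i\<in>I. a1 i) (\<Sum>i\<in>I. a2 i)"
  using assms
proof (induction I rule: finite_induct)
  case empty then show ?case using D2_const[of 0] by simp
next
  case (insert k I)
  then show ?case using D2_add[of "f k" "a0 k" "a1 k" "a2 k"] by simp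
qed

lemma D2_prod0:
  assumes "finite I" "\<And>i. i \<in> I \<Longrightarrow> D2 (f i) (a i) 0 (c i)"
  shows "D2 (\<lambda>e. \<Prod>i\<in>I. f i e) (\<Prod>i\<in>I. a i) 0 (\<Sum>i\<in>I. c i * (\<Prod>j\<in>I-{i}. a j))"
  using assms
proof (induction I rule: finite_induct)
  case empty then show ?case using D2_const[of 1] by simp
next
  case (insert k I)
  have *: "D2 (\<lambda>e. f k e * (\<Prod>i\<in>I. f i e)) (a k * (\<Prod>i\<in>I. a i)) 0
      (c k * (\<Prod>i\<in>I. a i) + a k * (\<Sum>i\<in>I. c i * (\<Prod>j\<in>I-{i}. a j)))"
    using D2_mult[OF insert(4)[of k] insert(3)] insert by simp
  have "(\<Sum>i\<in>insert k I. c i * (\<Prod>j\<in>insert k I-{i}. a j)) =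
     c k * (\<Prod>i\<in>I. a i) + a k * (\<Sum>i\<in>I. c i * (\<Prod>j\<in>I-{i}. a j))"
  proof -
    have "(\<Sum>i\<in>I. c i * (\<Prod>j\<in>insert k I-{i}. a j)) = (\<Sum>i\<in>I. a k * (c i * (\<Prod>j\<in>I-{i}. a j)))"
    proof (rule sum.cong[OF refl])
      fix i assume i: "i \<in> I"
      then have "insert k I - {i} = insert k (I - {i})" using insert by auto
      then show "c i * (\<Prod>j\<in>insert k I-{i}. a j) = a k * (c i * (\<Prod>j\<in>I-{i}. a j))"
        using insert by simp
    qed
    then show ?thesis using insert by (simp add: sum_distrib_left)
  qed
  then show ?case using * insert by simp
qed

lemma D2_power0:
  assumes "D2 f a 0 c"
  shows "D2 (\<lambda>e. f e ^ n) (a ^ n) 0 (of_nat n * a ^ (n - 1) * c)"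
proof (induction n)
  case 0 then show ?case using D2_const[of 1] by simp
next
  case (Suc n)
  have "D2 (\<lambda>e. f e * f e ^ n) (a * a ^ n) 0 (c * a ^ n + a * (of_nat n * a ^ (n - 1) * c))"
    using D2_mult[OF assms Suc] by simp
  moreover have "c * a ^ n + a * (of_nat n * a ^ (n - 1) * c) = of_nat (Suc n) * a ^ n * c"
    by (cases n) (auto simp: algebra_simps)
  ultimately show ?case by simp
qed

lemma D2_pow_id: "D2 (\<lambda>e. e ^ n) (if n = 0 then 1 else 0) (if n = 1 then 1 else 0) (if n = 2 then 2 else 0)"
proof (induction n)
  case 0 then show ?case using D2_const[of 1] by simp
next
  case (Suc n)
  show ?case using D2_mult[OF D2_id Suc] by (auto simp: numeral_2_eq_2)
qed

definition sm :: "(complex \<Rightarrow> complex) \<Rightarrow> bool" where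
  "sm f \<longleftrightarrow> (\<exists>a0 a1 a2. D2 f a0 a1 a2)"

lemma sm_mult: "sm f \<Longrightarrow> sm g \<Longrightarrow> sm (\<lambda>e. f e * g e)"
  unfolding sm_def using D2_mult by blast

lemma sm_const: "sm (\<lambda>_. c)" unfolding sm_def using D2_const by blast

lemma sm_power: "sm f \<Longrightarrow> sm (\<lambda>e. f e ^ n)"
  by (induction n) (auto intro: sm_const sm_mult)

lemma sm_prod: "finite I \<Longrightarrow> (\<And>i. i \<in> I \<Longrightarrow> sm (f i)) \<Longrightarrow> sm (\<lambda>e. \<Prod>i\<in>I. f i e)"
  by (induction I rule: finite_induct) (auto intro: sm_const sm_mult)

lemma D2_w: "D2 (\<lambda>e. c + e^2 * y) c 0 (2 * y)"
proof -
  have "D2 (\<lambda>e. e * e * y) 0 0 (2*y)"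
    using D2_mult[OF D2_mult[OF D2_id D2_id] D2_const[of y]] by simp
  from D2_add[OF D2_const[of c] this] show ?thesis by (simp add: power2_eq_square)
qed

lemma D2_mono:
  assumes "sm G" "2 \<le> d"
  shows "D2 (\<lambda>e. c * e ^ d * G e) 0 0 (if d = 2 then 2 * c * G 0 else 0)"
proof -
  obtain g0 g1 g2 where G: "D2 G g0 g1 g2" using assms(1) unfolding sm_def by blast
  have "G 0 = g0" using D2_deriv(1)[OF G] .
  then show ?thesis using D2_mult[OF D2_mult[OF D2_const[of c] D2_pow_id[of d]] G] assms(2) by (auto simp: mult_ac)
qed

lemma sm_csqrt:
  fixes xi :: real
  assumes "xi > 0" "norm y < xi"
  shows "sm (\<lambda>e. csqrt (of_real xi + e^2 * y))"
proof -
  define w where "w e = of_real xi + e^2 * y" for e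
  have nn: "w e \<notin> \<real>\<^sub>\<le>\<^sub>0" if "norm e < 1" for e
  proof -
    have "norm (e^2*y) \<le> norm y" using that by (simp add: norm_mult norm_power power_le_one mult_left_le_one_le)
    then have "norm (e^2*y) < xi" using assms by simp
    then have "Re (e^2*y) > - xi" using abs_Re_le_cmod[of "e^2*y"] by linarith
    then have "Re (w e) > 0" unfolding w_def by simp
    then show ?thesis by (auto simp: complex_nonpos_Reals_iff)
  qed
  define g1 where "g1 e = (2 * e * y) / (2 * csqrt (w e))" for e
  have d1: "((\<lambda>e. csqrt (w e)) has_field_derivative g1 e) (at e)" if "norm e < 1" for e
    unfolding g1_def w_def using nn[OF that] unfolding w_def
    by (auto intro!: derivative_eq_intros simp: power2_eq_square)
  have d2: "(g1 has_field_derivative deriv g1 e) (at e)" if "norm e < 1" for e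
  proof -
    have "csqrt (w e) \<noteq> 0" using nn[OF that] by auto
    have fd: "(\<lambda>e. csqrt (w e)) field_differentiable at e" using d1[OF that] field_differentiable_def by blast
    have "g1 field_differentiable at e"
      unfolding g1_def using \<open>csqrt (w e) \<noteq> 0\<close>
      by (auto intro!: derivative_intros fd)
    then show ?thesis using DERIV_deriv_iff_field_differentiable by blast
  qed
  show ?thesis unfolding sm_def D2_def w_def[symmetric]
    by (rule exI, rule exI, rule exI, rule exI[of _ g1], rule exI[of _ "deriv g1"], rule exI[of _ 1])
      (use d1 d2 in auto)
qed



lemma finite_funs: "finite S \<Longrightarrow> finite {f::'m::finite \<Rightarrow> 'b. \<forall>i. f i \<in> S}"
proof -
  assume "finite S"
  have "{f::'m \<Rightarrow> 'b. \<forall>i. f i \<in> S} = PiE UNIV (\<lambda>_. S)" by (auto simp: PiE_UNIV_domain)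
  then show ?thesis using \<open>finite S\<close> by (simp add: finite_PiE)
qed

lemma finite_bounded_nat: "finite {a::'m::finite \<Rightarrow> nat. \<forall>i. a i \<le> N}"
  using finite_funs[of "{..N}"] by simp

lemma finite_supp_funs:
  assumes "finite F"
  shows "finite {a::'k \<Rightarrow> nat. (\<forall>k. k \<notin> F \<longrightarrow> a k = 0) \<and> (\<forall>k. a k \<le> N)}"
proof (rule inj_on_finite[where f="\<lambda>a. restrict a F" and B="PiE F (\<lambda>_. {..N})"])
  show "inj_on (\<lambda>a. restrict a F) {a. (\<forall>k. k \<notin> F \<longrightarrow> a k = 0) \<and> (\<forall>k. a k \<le> N)}"
  proof (rule inj_onI)
    fix a b assume a: "a \<in> {a. (\<forall>k. k \<notin> F \<longrightarrow> a k = 0) \<and> (\<forall>k. a k \<le> N)}"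
      and b: "b \<in> {a. (\<forall>k. k \<notin> F \<longrightarrow> a k = 0) \<and> (\<forall>k. a k \<le> N)}"
      and eq: "restrict a F = restrict b F"
    show "a = b"
    proof
      fix k show "a k = b k"
        using a b fun_cong[OF eq, of k] by (cases "k \<in> F") auto
    qed
  qed
  show "(\<lambda>a. restrict a F) ` {a. (\<forall>k. k \<notin> F \<longrightarrow> a k = 0) \<and> (\<forall>k. a k \<le> N)} \<subseteq> PiE F (\<lambda>_. {..N})"
    by auto
  show "finite (PiE F (\<lambda>_. {..N}))" using assms by (simp add: finite_PiE)
qed

lemma prod_cis: "finite A \<Longrightarrow> (\<Prod>i\<in>A. cis (f i)) = cis (\<Sum>i\<in>A. f i)"
  by (induction A rule: finite_induct) (auto simp: cis_mult)

lemma repr: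
  fixes \<alpha> \<beta> :: "'m::finite \<Rightarrow> nat"
  assumes "(\<Sum>i\<in>UNIV. \<alpha> i) + (\<Sum>i\<in>UNIV. \<beta> i) = N"
  shows "\<exists>idx::nat\<Rightarrow>'m. \<exists>sg::nat\<Rightarrow>int. (\<forall>j<N. sg j = 1 \<or> sg j = -1) \<and>
     (\<lambda>i. int (\<alpha> i) - int (\<beta> i)) = (\<lambda>i. \<Sum>j<N. if idx j = i then sg j else 0)"
  using assms
proof (induction N arbitrary: \<alpha> \<beta>)
  case 0
  then have "\<forall>i. \<alpha> i = 0" "\<forall>i. \<beta> i = 0" by auto
  then show ?case by auto
next
  case (Suc M)
  show ?case
  proof (cases "\<exists>i0. \<alpha> i0 > 0")
    case True
    then obtain i0 where i0: "\<alpha> i0 > 0" by blast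
    define \<alpha>' where "\<alpha>' i = (if i = i0 then \<alpha> i - 1 else \<alpha> i)" for i
    have ae: "\<alpha> i = \<alpha>' i + (if i = i0 then 1 else 0)" for i using i0 by (auto simp: \<alpha>'_def)
    have "(\<Sum>i\<in>UNIV. \<alpha> i) = (\<Sum>i\<in>UNIV. \<alpha>' i) + 1" by (subst ae) (simp add: sum.distrib)
    then have "(\<Sum>i\<in>UNIV. \<alpha>' i) + (\<Sum>i\<in>UNIV. \<beta> i) = M" using Suc.prems by simp
    from Suc.IH[OF this] obtain idx sg where
      s: "\<forall>j<M. sg j = 1 \<or> sg j = -1" and e: "(\<lambda>i. int (\<alpha>' i) - int (\<beta> i)) = (\<lambda>i. \<Sum>j<M. if idx j = i then sg j else 0)"
      by blast
    show ?thesis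
    proof (intro exI conjI)
      show "\<forall>j<Suc M. (sg(M := 1)) j = 1 \<or> (sg(M := 1)) j = -1" using s by (auto simp: less_Suc_eq)
      show "(\<lambda>i. int (\<alpha> i) - int (\<beta> i)) = (\<lambda>i. \<Sum>j<Suc M. if (idx(M:=i0)) j = i then (sg(M := 1)) j else 0)"
      proof
        fix i
        have "(\<Sum>j<M. if (idx(M:=i0)) j = i then (sg(M := 1)) j else 0) = (\<Sum>j<M. if idx j = i then sg j else 0)"
          by (rule sum.cong) auto
        then have "(\<Sum>j<Suc M. if (idx(M:=i0)) j = i then (sg(M := 1)) j else 0) =
              (\<Sum>j<M. if idx j = i then sg j else 0) + (if i0 = i then 1 else 0)"
          by simp
        also have "\<dots> = int (\<alpha>' i) - int (\<beta> i) + (if i0 = i then 1 else 0)" using fun_cong[OF e, of i] by simp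
        also have "\<dots> = int (\<alpha> i) - int (\<beta> i)" using ae[of i] by auto
        finally show "int (\<alpha> i) - int (\<beta> i) = (\<Sum>j<Suc M. if (idx(M:=i0)) j = i then (sg(M := 1)) j else 0)" by simp
      qed
    qed
  next
    case False
    then have a0: "\<forall>i. \<alpha> i = 0" by auto
    then have "(\<Sum>i\<in>UNIV. \<beta> i) = Suc M" using Suc.prems by simp
    then obtain i0 where i0: "\<beta> i0 > 0" by (metis gr0I sum.neutral nat.simps(3))
    define \<beta>' where "\<beta>' i = (if i = i0 then \<beta> i - 1 else \<beta> i)" for i
    have be: "\<beta> i = \<beta>' i + (if i = i0 then 1 else 0)" for i using i0 by (auto simp: \<beta>'_def)
    have "(\<Sum>i\<in>UNIV. \<beta> i) = (\<Sum>i\<in>UNIV. \<beta>' i) + 1" by (subst be) (simp add: sum.distrib)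
    then have "(\<Sum>i\<in>UNIV. \<alpha> i) + (\<Sum>i\<in>UNIV. \<beta>' i) = M" using Suc.prems by simp
    from Suc.IH[OF this] obtain idx sg where
      s: "\<forall>j<M. sg j = 1 \<or> sg j = -1" and e: "(\<lambda>i. int (\<alpha> i) - int (\<beta>' i)) = (\<lambda>i. \<Sum>j<M. if idx j = i then sg j else 0)"
      by blast
    show ?thesis
    proof (intro exI conjI)
      show "\<forall>j<Suc M. (sg(M := -1)) j = 1 \<or> (sg(M := -1)) j = -1" using s by (auto simp: less_Suc_eq)
      show "(\<lambda>i. int (\<alpha> i) - int (\<beta> i)) = (\<lambda>i. \<Sum>j<Suc M. if (idx(M:=i0)) j = i then (sg(M := -1)) j else 0)"
      proof
        fix i
        have "(\<Sum>j<M. if (idx(M:=i0)) j = i then (sg(M := -1)) j else 0) = (\<Sum>j<M. if idx j = i then sg j else 0)"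
          by (rule sum.cong) auto
        then have "(\<Sum>j<Suc M. if (idx(M:=i0)) j = i then (sg(M := -1)) j else 0) =
              (\<Sum>j<M. if idx j = i then sg j else 0) - (if i0 = i then 1 else 0)"
          by simp
        also have "\<dots> = int (\<alpha> i) - int (\<beta>' i) - (if i0 = i then 1 else 0)" using fun_cong[OF e, of i] by simp
        also have "\<dots> = int (\<alpha> i) - int (\<beta> i)" using be[of i] by auto
        finally show "int (\<alpha> i) - int (\<beta> i) = (\<Sum>j<Suc M. if (idx(M:=i0)) j = i then (sg(M := -1)) j else 0)" by simp
      qed
    qed
  qed
qed

lemma repr_bound:
  fixes sg :: "nat \<Rightarrow> int"
  assumes "\<forall>j<N. sg j = 1 \<or> sg j = -1"
  shows "\<bar>\<Sum>j<N. if idx j = i then sg j else 0\<bar> \<le> int N"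
proof -
  have "\<bar>\<Sum>j<N. if idx j = i then sg j else 0\<bar> \<le> (\<Sum>j<N. \<bar>if idx j = i then sg j else 0\<bar>)"
    by (rule sum_abs)
  also have "\<dots> \<le> (\<Sum>j<N. 1)" by (rule sum_mono) (use assms in auto)
  finally show ?thesis by simp
qed

lemma finite_Xq: "finite (Xq q :: ('m::finite \<Rightarrow> int) set)"
proof (rule finite_subset)
  show "Xq q \<subseteq> {f::'m \<Rightarrow> int. \<forall>i. f i \<in> {-int (2*q)..int (2*q)}}"
  proof
    fix l :: "'m \<Rightarrow> int" assume "l \<in> Xq q"
    then obtain idx sg where s: "\<forall>j<2*q. sg j = 1 \<or> sg j = -1" and l: "l = (\<lambda>i. \<Sum>j<2*q. if idx j = i then sg j else 0)"
      unfolding Xq_def by blast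
    have "\<forall>i. \<bar>\<Sum>j<2*q. if idx j = i then sg j else 0\<bar> \<le> int (2*q)" by (intro allI repr_bound[OF s])
    then show "l \<in> {f::'m \<Rightarrow> int. \<forall>i. f i \<in> {-int (2*q)..int (2*q)}}"
      unfolding l by (simp add: abs_le_iff) (meson minus_le_iff)
  qed
  show "finite {f::'m \<Rightarrow> int. \<forall>i. f i \<in> {-int (2*q)..int (2*q)}}" by (rule finite_funs) simp
qed

lemma fact_prod_dvd: "finite A \<Longrightarrow> (\<Prod>i\<in>A. fact (\<alpha> i) :: nat) dvd fact (\<Sum>i\<in>A. \<alpha> i)"
proof (induction A rule: finite_induct)
  case empty then show ?case by simp
next
  case (insert k A)
  have "fact (\<alpha> k) * fact (\<Sum>i\<in>A. \<alpha> i) dvd (fact (\<alpha> k + (\<Sum>i\<in>A. \<alpha> i)) :: nat)"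
    using binomial_fact_lemma[of "\<alpha> k" "\<alpha> k + (\<Sum>i\<in>A. \<alpha> i)"]
    by (metis add_diff_cancel_left' dvd_triv_left le_add1)
  moreover have "fact (\<alpha> k) * (\<Prod>i\<in>A. fact (\<alpha> i)) dvd fact (\<alpha> k) * (fact (\<Sum>i\<in>A. \<alpha> i) :: nat)"
    using insert by simp
  moreover have "fact (\<alpha> k) * (\<Prod>i\<in>A. fact (\<alpha> i)) dvd fact (\<alpha> k) * (fact (\<Sum>i\<in>A. \<alpha> i) :: nat)"
    by (rule mult_dvd_mono) (use insert in auto)
  ultimately show ?case using insert by (auto intro: dvd_trans)
qed

definition PF :: "('a \<Rightarrow> nat) \<Rightarrow> nat" where "PF a = (\<Prod>i\<in>{i. a i \<noteq> 0}. fact (a i))"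

lemma multinom_PF: "multinom r a = fact r div PF a" by (simp add: multinom_def PF_def)

lemma PF_univ: "PF (\<alpha>::'m::finite \<Rightarrow> nat) = (\<Prod>i\<in>UNIV. fact (\<alpha> i))"
  unfolding PF_def by (rule prod.mono_neutral_left) auto

lemma PF_dvd: "PF (\<alpha>::'m::finite \<Rightarrow> nat) dvd fact (\<Sum>i\<in>UNIV. \<alpha> i)"
  unfolding PF_univ by (rule fact_prod_dvd) simp



lemma n0:
  fixes n :: "'m::finite \<Rightarrow> int"
  assumes "(\<Sum>i\<in>UNIV. n i) = 0" "(\<Sum>i\<in>UNIV. \<bar>n i\<bar>) \<le> 1"
  shows "n = (\<lambda>_. 0)"
proof (rule ccontr)
  assume "n \<noteq> (\<lambda>_. 0)"
  then obtain i0 where i0: "n i0 \<noteq> 0" by auto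
  have s1: "(\<Sum>i\<in>UNIV. \<bar>n i\<bar>) = \<bar>n i0\<bar> + (\<Sum>i\<in>UNIV-{i0}. \<bar>n i\<bar>)" by (simp add: sum.remove)
  have "(\<Sum>i\<in>UNIV-{i0}. \<bar>n i\<bar>) \<ge> 0" by (rule sum_nonneg) auto
  then have "(\<Sum>i\<in>UNIV-{i0}. \<bar>n i\<bar>) = 0" using s1 assms(2) i0 by linarith
  then have "\<forall>i\<in>UNIV-{i0}. n i = 0" by (subst (asm) sum_nonneg_eq_0_iff) auto
  then have "(\<Sum>i\<in>UNIV-{i0}. n i) = 0" by simp
  moreover have "(\<Sum>i\<in>UNIV. n i) = n i0 + (\<Sum>i\<in>UNIV-{i0}. n i)" by (simp add: sum.remove)
  ultimately show False using assms(1) i0 by simp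
qed

lemma n1:
  fixes n :: "'m::finite \<Rightarrow> int"
  assumes "(\<Sum>i\<in>UNIV. n i) = 1" "(\<Sum>i\<in>UNIV. \<bar>n i\<bar>) \<le> 1"
  shows "\<exists>j. n = (\<lambda>i. if i = j then 1 else 0)"
proof -
  obtain i0 where i0: "n i0 \<noteq> 0" using assms(1) by (metis (mono_tags) sum.neutral zero_neq_one)
  have s1: "(\<Sum>i\<in>UNIV. \<bar>n i\<bar>) = \<bar>n i0\<bar> + (\<Sum>i\<in>UNIV-{i0}. \<bar>n i\<bar>)" by (simp add: sum.remove)
  have "(\<Sum>i\<in>UNIV-{i0}. \<bar>n i\<bar>) \<ge> 0" by (rule sum_nonneg) auto
  then have "(\<Sum>i\<in>UNIV-{i0}. \<bar>n i\<bar>) = 0" using s1 assms(2) i0 by linarith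
  then have z: "\<forall>i\<in>UNIV-{i0}. n i = 0" by (subst (asm) sum_nonneg_eq_0_iff) auto
  then have "(\<Sum>i\<in>UNIV-{i0}. n i) = 0" by simp
  moreover have "(\<Sum>i\<in>UNIV. n i) = n i0 + (\<Sum>i\<in>UNIV-{i0}. n i)" by (simp add: sum.remove)
  ultimately have "n i0 = 1" using assms(1) by simp
  then show ?thesis using z by (intro exI[of _ i0]) auto
qed

lemma abs_diff_sum:
  fixes \<alpha> \<beta> :: "'m::finite \<Rightarrow> nat"
  shows "(\<Sum>i\<in>UNIV. \<bar>int (\<alpha> i) - int (\<beta> i)\<bar>) \<le> int (\<Sum>i\<in>UNIV. \<alpha> i) + int (\<Sum>i\<in>UNIV. \<beta> i)"
proof -
  have "(\<Sum>i\<in>UNIV. \<bar>int (\<alpha> i) - int (\<beta> i)\<bar>) \<le> (\<Sum>i\<in>UNIV. int (\<alpha> i) + int (\<beta> i))"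
    by (rule sum_mono) auto
  then show ?thesis by (simp add: sum.distrib)
qed

lemma nsq_scale: "nsq (c *s h) = c^2 * nsq h"
  unfolding nsq_def by (simp add: sum_distrib_left power_mult_distrib)

lemma nsq_parallel: "2 * (nsq h + nsq k) = nsq (h + k) + nsq (h - k)"
  unfolding nsq_def by (simp add: sum_distrib_left sum.distrib[symmetric] algebra_simps power2_eq_square)

lemma nsq_zero: "nsq h = 0 \<Longrightarrow> h = 0"
proof -
  assume "nsq h = 0"
  then have "\<forall>j\<in>UNIV. (h$j)^2 = 0" unfolding nsq_def by (subst (asm) sum_nonneg_eq_0_iff) auto
  then show "h = 0" by (simp add: vec_eq_iff)
qed

lemma piZ_delta: "piZ v (\<lambda>i. if i = j then 1 else 0) = v j"
proof -
  have "(\<Sum>i\<in>UNIV. (if i = j then 1 else 0) *s v i) = (\<Sum>i\<in>UNIV. if i = j then v i else 0)"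
    by (rule sum.cong) auto
  then show ?thesis unfolding piZ_def by simp
qed

lemma sum_one_Z:
  fixes g :: "'a \<Rightarrow> nat"
  assumes "finite Z" "sum g Z = 1"
  shows "\<exists>h\<in>Z. \<forall>k\<in>Z. g k = (if k = h then 1 else 0)"
proof -
  obtain h where h: "h \<in> Z" "g h \<noteq> 0" using assms by (metis sum.neutral zero_neq_one)
  have "sum g Z = g h + sum g (Z - {h})" using assms h by (simp add: sum.remove)
  then have e: "g h + sum g (Z - {h}) = 1" using assms by simp
  then have "g h = 1" "sum g (Z - {h}) = 0" using h(2) by arith+
  then have "\<forall>k\<in>Z-{h}. g k = 0" using assms by simp
  then show ?thesis using h \<open>g h = 1\<close> by (intro bexI[of _ h]) auto
qed

lemma sum_two_Z:
  fixes g :: "'a \<Rightarrow> nat"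
  assumes "finite Z" "sum g Z = 2"
  shows "(\<exists>h\<in>Z. \<forall>k\<in>Z. g k = (if k = h then 2 else 0)) \<or>
         (\<exists>h\<in>Z. \<exists>k\<in>Z. h \<noteq> k \<and> (\<forall>j\<in>Z. g j = (if j \<in> {h,k} then 1 else 0)))"
proof -
  obtain h where h: "h \<in> Z" "g h \<noteq> 0" using assms by (metis sum.neutral zero_neq_numeral)
  have s: "sum g Z = g h + sum g (Z - {h})" using assms h by (simp add: sum.remove)
  show ?thesis
  proof (cases "g h = 2")
    case True
    then have "sum g (Z - {h}) = 0" using s assms by simp
    then have "\<forall>k\<in>Z-{h}. g k = 0" using assms by simp
    then show ?thesis using h True by auto
  next
    case False
    have e: "g h + sum g (Z - {h}) = 2" using s assms by simp
    then have "g h = 1" "sum g (Z - {h}) = 1" using h(2) False by arith+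
    from sum_one_Z[OF _ this(2)] assms obtain k where k: "k \<in> Z - {h}" "\<forall>j\<in>Z-{h}. g j = (if j = k then 1 else 0)"
      by auto
    then show ?thesis using h \<open>g h = 1\<close> by (intro disjI2 bexI[of _ h] bexI[of _ k]) auto
  qed
qed

definition lift :: "('m \<Rightarrow> int^'n) \<Rightarrow> ('m \<Rightarrow> nat) \<Rightarrow> (int^'n \<Rightarrow> nat) \<Rightarrow> int^'n \<Rightarrow> nat" where
  "lift v \<alpha> g = (\<lambda>k. if k \<in> range v then \<alpha> (inv v k) else g k)"

definition ind :: "'a set \<Rightarrow> 'a \<Rightarrow> nat" where "ind p = (\<lambda>k. if k \<in> p then 1 else 0)"

locale L =
  fixes v :: "'m::finite \<Rightarrow> int^'n" and q :: nat and xi :: "'m \<Rightarrow> real" and x :: "'m \<Rightarrow> real"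
    and y :: "'m \<Rightarrow> complex" and z :: "int^'n \<Rightarrow> complex"
  assumes q1: "q \<ge> 1"
    and dist: "inj v"
    and H1: "\<forall>nn::'m \<Rightarrow> int. (\<Sum>i\<in>UNIV. nn i) = 0 \<and> 1 < (\<Sum>i\<in>UNIV. \<bar>nn i\<bar>)
               \<and> (\<Sum>i\<in>UNIV. \<bar>nn i\<bar>) \<le> 2*int q + 2 \<longrightarrow> piZ v nn \<noteq> 0"
    and H2: "\<forall>nn::'m \<Rightarrow> int. (\<Sum>i\<in>UNIV. nn i) = 1 \<and> 1 < (\<Sum>i\<in>UNIV. \<bar>nn i\<bar>)
               \<and> (\<Sum>i\<in>UNIV. \<bar>nn i\<bar>) \<le> 2*int q + 1 \<longrightarrow> nsq (piZ v nn) - wsq v nn \<noteq> 0"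
    and H4: "\<forall>l\<in>Xq2 q. 2 * wsq v l + nsq (piZ v l) \<noteq> 0"
    and xipos: "\<forall>i. xi i > 0" and ysm: "\<forall>i. norm (y i) < xi i"
    and finZ0: "finite {k. z k \<noteq> 0}" and ZSc: "{k. z k \<noteq> 0} \<subseteq> Sc v"
begin

definition "Z = {k. z k \<noteq> 0}"
definition "F = range v \<union> Z"

lemma finZ: "finite Z" using finZ0 by (simp add: Z_def)
lemma finF: "finite F" using finZ by (simp add: F_def)
lemma Zdisj: "k \<in> Z \<Longrightarrow> k \<notin> range v" using ZSc by (auto simp: Z_def Sc_def)
lemma ZSc': "k \<in> Z \<Longrightarrow> k \<in> Sc v" using ZSc by (auto simp: Z_def)
lemma inv_v[simp]: "inv v (v i) = i" using dist by simp

lemma sumF: "sum \<phi> F = (\<Sum>i\<in>UNIV. \<phi> (v i)) + sum \<phi> Z"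
proof -
  have "sum \<phi> F = sum \<phi> (range v) + sum \<phi> Z"
    unfolding F_def by (rule sum.union_disjoint) (use finZ Zdisj in auto)
  also have "sum \<phi> (range v) = (\<Sum>i\<in>UNIV. \<phi> (v i))" using sum.reindex[OF dist, of \<phi>] by simp
  finally show ?thesis .
qed

lemma prodF: "prod \<phi> F = (\<Prod>i\<in>UNIV. \<phi> (v i)) * prod \<phi> Z"
proof -
  have "prod \<phi> F = prod \<phi> (range v) * prod \<phi> Z"
    unfolding F_def by (rule prod.union_disjoint) (use finZ Zdisj in auto)
  also have "prod \<phi> (range v) = (\<Prod>i\<in>UNIV. \<phi> (v i))" using prod.reindex[OF dist, of \<phi>] by simp
  finally show ?thesis .
qed

lemma lift_v[simp]: "lift v \<alpha> g (v i) = \<alpha> i" by (simp add: lift_def)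
lemma lift_Z: "k \<notin> range v \<Longrightarrow> lift v \<alpha> g k = g k" by (simp add: lift_def)
lemma lift_comp[simp]: "lift v \<alpha> g \<circ> v = \<alpha>" by (auto simp: lift_def)

lemma RM_iff: "(a,b) \<in> RM q F \<longleftrightarrow> (\<forall>k. k\<notin>F \<longrightarrow> a k = 0) \<and> (\<forall>k. k \<notin> F \<longrightarrow> b k = 0)
   \<and> (\<Sum>i\<in>UNIV. a (v i)) + sum a Z = q+1 \<and> (\<Sum>i\<in>UNIV. b (v i)) + sum b Z = q+1
   \<and> piZ v (\<lambda>i. int (a (v i)) - int (b (v i))) + (\<Sum>k\<in>Z. (int (a k) - int (b k)) *s k) = 0
   \<and> wsq v (\<lambda>i. int (a (v i)) - int (b (v i))) + (\<Sum>k\<in>Z. (int (a k) - int (b k)) * nsq k) = 0"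
proof -
  have m: "(\<Sum>k\<in>F. (int (a k) - int (b k)) *s k) = piZ v (\<lambda>i. int (a (v i)) - int (b (v i))) + (\<Sum>k\<in>Z. (int (a k) - int (b k)) *s k)"
    unfolding piZ_def by (rule sumF)
  have e: "(\<Sum>k\<in>F. (int (a k) - int (b k)) * nsq k) = wsq v (\<lambda>i. int (a (v i)) - int (b (v i))) + (\<Sum>k\<in>Z. (int (a k) - int (b k)) * nsq k)"
    unfolding wsq_def by (rule sumF)
  show ?thesis by (simp only: RM_def mem_Collect_eq prod.case m e sumF[of a] sumF[of b])
qed

lemma finite_RM: "finite (RM q F)"
proof (rule finite_subset)
  let ?S = "{a::int^'n \<Rightarrow> nat. (\<forall>k. k \<notin> F \<longrightarrow> a k = 0) \<and> (\<forall>k. a k \<le> q+1)}"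
  show "RM q F \<subseteq> ?S \<times> ?S"
  proof
    fix ab assume ab0: "ab \<in> RM q F"
    obtain a b where abe: "ab = (a,b)" by (cases ab)
    have ab: "(a,b) \<in> RM q F" using ab0 abe by simp
    have le: "c k \<le> q + 1" if "\<forall>k. k \<notin> F \<longrightarrow> c k = 0" "sum c F = q+1" for c :: "int^'n \<Rightarrow> nat" and k
    proof (cases "k \<in> F")
      case True then show ?thesis using member_le_sum[of k F c] finF that by auto
    qed (use that in auto)
    have "a \<in> ?S" "b \<in> ?S" using ab le unfolding RM_def by auto
    then show "ab \<in> ?S \<times> ?S" using abe by simp
  qed
  show "finite (?S \<times> ?S)" using finite_supp_funs[OF finF] by blast
qed

definition "w i e = complex_of_real (xi i) + e^2 * y i"
definition "U i e = csqrt (w i e) * cis (x i)"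
definition "UB i e = csqrt (w i e) * cis (- x i)"
definition "G \<alpha> \<beta> e = (\<Prod>i\<in>UNIV. U i e ^ \<alpha> i) * (\<Prod>i\<in>UNIV. UB i e ^ \<beta> i)"
definition "Zm a b = (\<Prod>k\<in>Z. z k ^ a k) * (\<Prod>k\<in>Z. cnj (z k) ^ b k)"
definition "coef a b = (of_nat (multinom (q+1) a * multinom (q+1) b) :: complex)"
definition "Tm ab e = (case ab of (a,b) \<Rightarrow> of_nat (multinom (q+1) a * multinom (q+1) b)
    * (\<Prod>k\<in>F. usub v xi x y z e k ^ a k) * (\<Prod>k\<in>F. ubsub v xi x y z e k ^ b k))"
definition "Quad e = (\<Sum>k\<in>F. of_int (nsq k) * usub v xi x y z e k * ubsub v xi x y z e k)"

lemma Hsub_eq: "Hsub q v xi x y z e = Quad e + (\<Sum>ab\<in>RM q F. Tm ab e)"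
  unfolding Hsub_def Hres_def Quad_def Tm_def F_def Z_def by (simp add: case_prod_unfold)

lemma usub_v[simp]: "usub v xi x y z e (v i) = U i e" by (simp add: usub_def U_def w_def)
lemma ubsub_v[simp]: "ubsub v xi x y z e (v i) = UB i e" by (simp add: ubsub_def UB_def w_def)
lemma usub_Z: "k \<in> Z \<Longrightarrow> usub v xi x y z e k = e * z k" using Zdisj by (simp add: usub_def)
lemma ubsub_Z: "k \<in> Z \<Longrightarrow> ubsub v xi x y z e k = e * cnj (z k)" using Zdisj by (simp add: ubsub_def)

lemma prod_Z_pow: "(\<Prod>k\<in>Z. (e * c k) ^ a k) = e ^ sum a Z * (\<Prod>k\<in>Z. c k ^ a k)"
  by (simp add: power_mult_distrib prod.distrib power_sum)

lemma Tm_fact: "Tm (a,b) e = coef a b * e ^ (sum a Z + sum b Z) * Zm a b * G (a \<circ> v) (b \<circ> v) e"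
proof -
  have 1: "(\<Prod>k\<in>F. usub v xi x y z e k ^ a k) = (\<Prod>i\<in>UNIV. U i e ^ a (v i)) * (e ^ sum a Z * (\<Prod>k\<in>Z. z k ^ a k))"
    unfolding prodF by (simp add: prod_Z_pow[symmetric] usub_Z cong: prod.cong)
  have 2: "(\<Prod>k\<in>F. ubsub v xi x y z e k ^ b k) = (\<Prod>i\<in>UNIV. UB i e ^ b (v i)) * (e ^ sum b Z * (\<Prod>k\<in>Z. cnj (z k) ^ b k))"
    unfolding prodF by (simp add: prod_Z_pow[symmetric] ubsub_Z cong: prod.cong)
  show ?thesis unfolding Tm_def prod.case unfolding 1 2 coef_def Zm_def G_def by (simp add: power_add mult_ac)
qed

lemma Quad_eq: "Quad e = (\<Sum>i\<in>UNIV. of_int (nsq (v i)) * w i e) + e^2 * (\<Sum>k\<in>Z. of_int (nsq k) * (z k * cnj (z k)))"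
proof -
  have "U i e * UB i e = w i e" for i
    unfolding U_def UB_def by (simp add: mult_ac cis_mult power2_eq_square[symmetric])
  then show ?thesis unfolding Quad_def sumF
    by (simp add: usub_Z ubsub_Z sum_distrib_left mult_ac power2_eq_square cong: sum.cong)
qed

end


lemma piZ_neg: "piZ v (\<lambda>i. - l i) = - piZ v l"
proof -
  have "\<And>i. (- l i) *s v i = - (l i *s v i)" by (simp add: vec_eq_iff)
  then show ?thesis unfolding piZ_def by (simp add: sum_negf)
qed
lemma wsq_neg: "wsq v (\<lambda>i. - l i) = - wsq v l"
  unfolding wsq_def by (simp add: sum_negf)

lemma sum_int_diff: "(\<Sum>i\<in>UNIV. int (\<alpha> i) - int (\<beta> i)) = int (\<Sum>i\<in>UNIV. \<alpha> i) - int (\<Sum>i\<in>UNIV. \<beta> i)"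
  by (simp add: sum_subtractf)

context L begin

lemma lift_ext: "(\<forall>k. k \<notin> range v \<longrightarrow> a k = g k) \<Longrightarrow> a = lift v (a \<circ> v) g"
  by (auto simp: lift_def fun_eq_iff f_inv_into_f)

lemma supp_zero_Z: "(a,b) \<in> RM q F \<Longrightarrow> sum a Z = 0 \<Longrightarrow> a = lift v (a \<circ> v) (\<lambda>_. 0)"
proof (rule lift_ext, intro allI impI)
  fix k assume ab: "(a,b) \<in> RM q F" and s: "sum a Z = 0" and k: "k \<notin> range v"
  have "\<forall>k. k \<notin> F \<longrightarrow> a k = 0" using ab by (simp add: RM_iff)
  moreover have "\<forall>k\<in>Z. a k = 0" using s finZ by simp
  ultimately show "a k = 0" using k unfolding F_def by blast
qed

lemma supp_zero_Z': "(a,b) \<in> RM q F \<Longrightarrow> sum b Z = 0 \<Longrightarrow> b = lift v (b \<circ> v) (\<lambda>_. 0)"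
proof (rule lift_ext, intro allI impI)
  fix k assume ab: "(a,b) \<in> RM q F" and s: "sum b Z = 0" and k: "k \<notin> range v"
  have "\<forall>k. k \<notin> F \<longrightarrow> b k = 0" using ab by (simp add: RM_iff)
  moreover have "\<forall>k\<in>Z. b k = 0" using s finZ by simp
  ultimately show "b k = 0" using k unfolding F_def by blast
qed

lemma R0_eq:
  assumes ab: "(a,b) \<in> RM q F" and a0: "sum a Z = 0" and b0: "sum b Z = 0"
  shows "b = a" "a = lift v (a \<circ> v) (\<lambda>_. 0)"
proof -
  show la: "a = lift v (a \<circ> v) (\<lambda>_. 0)" by (rule supp_zero_Z[OF ab a0])
  have lb: "b = lift v (b \<circ> v) (\<lambda>_. 0)" by (rule supp_zero_Z'[OF ab b0])
  define nn where "nn i = int (a (v i)) - int (b (v i))" for i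
  have az: "\<forall>k\<in>Z. a k = 0" "\<forall>k\<in>Z. b k = 0" using a0 b0 finZ by auto
  have RM: "(\<Sum>i\<in>UNIV. a (v i)) + sum a Z = q+1" "(\<Sum>i\<in>UNIV. b (v i)) + sum b Z = q+1"
    "piZ v (\<lambda>i. int (a (v i)) - int (b (v i))) + (\<Sum>k\<in>Z. (int (a k) - int (b k)) *s k) = 0"
    using ab unfolding RM_iff by blast+
  have z0: "(\<Sum>k\<in>Z. (int (a k) - int (b k)) *s k) = 0" by (rule sum.neutral) (use az in simp)
  have r: "(\<Sum>i\<in>UNIV. a (v i)) = q+1" "(\<Sum>i\<in>UNIV. b (v i)) = q+1" "piZ v nn = 0"
    using RM a0 b0 z0 unfolding nn_def by simp_all
  have "(\<Sum>i\<in>UNIV. nn i) = int (\<Sum>i\<in>UNIV. a (v i)) - int (\<Sum>i\<in>UNIV. b (v i))"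
    unfolding nn_def by (rule sum_int_diff)
  then have s0: "(\<Sum>i\<in>UNIV. nn i) = 0" unfolding r(1,2) by simp
  have "(\<Sum>i\<in>UNIV. \<bar>nn i\<bar>) \<le> int (\<Sum>i\<in>UNIV. a (v i)) + int (\<Sum>i\<in>UNIV. b (v i))"
    using abs_diff_sum[of "a \<circ> v" "b \<circ> v"] unfolding nn_def by (simp only: o_def)
  then have "(\<Sum>i\<in>UNIV. \<bar>nn i\<bar>) \<le> 2 * int q + 2" unfolding r by simp
  then have "\<not> 1 < (\<Sum>i\<in>UNIV. \<bar>nn i\<bar>)" using H1[rule_format, of nn] s0 r(3) by blast
  then have "(\<Sum>i\<in>UNIV. \<bar>nn i\<bar>) \<le> 1" by simp
  from n0[OF s0 this] have "nn = (\<lambda>_. 0)" .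
  then have "a \<circ> v = b \<circ> v" unfolding nn_def by (auto simp: fun_eq_iff)
  then show "b = a" using la lb by metis
qed

lemma sum_delta_Z: "h \<in> Z \<Longrightarrow> (\<Sum>k\<in>Z. (if k = h then c else 0) * f k) = (c::'b::semiring_0) * f h"
proof -
  assume h: "h \<in> Z"
  have "(\<Sum>k\<in>Z. (if k = h then c else 0) * f k) = (\<Sum>k\<in>Z. if k = h then c * f k else 0)"
    by (rule sum.cong) auto
  then show ?thesis using finZ h by simp
qed

lemma sum_delta_Zs: "h \<in> Z \<Longrightarrow> (\<Sum>k\<in>Z. (if k = h then c else 0) *s k) = c *s h"
proof -
  assume h: "h \<in> Z"
  have "(\<Sum>k\<in>Z. (if k = h then c else 0) *s k) = (\<Sum>k\<in>Z. if k = h then c *s k else 0)"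
    by (rule sum.cong) auto
  then show ?thesis using finZ h by simp
qed

lemma R1_empty:
  assumes ab: "(a,b) \<in> RM q F" and d: "sum a Z + sum b Z = 1"
  shows False
proof -
  have key: False if hZ: "h \<in> Z" and nsum: "(\<Sum>i\<in>UNIV. nn i) = 1"
     and nabs: "(\<Sum>i\<in>UNIV. \<bar>nn i\<bar>) \<le> 2 * int q + 1"
     and mom: "piZ v nn = h" and en: "wsq v nn = nsq h" for nn h
  proof -
    have "\<not> 1 < (\<Sum>i\<in>UNIV. \<bar>nn i\<bar>)" using H2[rule_format, of nn] nsum nabs mom en by auto
    then have "(\<Sum>i\<in>UNIV. \<bar>nn i\<bar>) \<le> 1" by simp
    from n1[OF nsum this] obtain j where "nn = (\<lambda>i. if i = j then 1 else 0)" by blast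
    then have "h = v j" using mom piZ_delta by metis
    then show False using Zdisj[OF hZ] by auto
  qed
  have r: "(\<Sum>i\<in>UNIV. a (v i)) + sum a Z = q+1" "(\<Sum>i\<in>UNIV. b (v i)) + sum b Z = q+1"
    "piZ v (\<lambda>i. int (a (v i)) - int (b (v i))) + (\<Sum>k\<in>Z. (int (a k) - int (b k)) *s k) = 0"
    "wsq v (\<lambda>i. int (a (v i)) - int (b (v i))) + (\<Sum>k\<in>Z. (int (a k) - int (b k)) * nsq k) = 0"
    using ab unfolding RM_iff by auto
  have ab_abs: "(\<Sum>i\<in>UNIV. \<bar>int (a (v i)) - int (b (v i))\<bar>) \<le> int (\<Sum>i\<in>UNIV. a (v i)) + int (\<Sum>i\<in>UNIV. b (v i))"
    using abs_diff_sum[of "a \<circ> v" "b \<circ> v"] by (simp only: o_def)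
  show False
  proof (cases "sum a Z = 1")
    case True
    then have b0: "sum b Z = 0" using d by simp
    then have bz: "\<forall>k\<in>Z. b k = 0" using finZ by auto
    obtain h where h: "h \<in> Z" "\<forall>k\<in>Z. a k = (if k = h then 1 else 0)" using sum_one_Z[OF finZ True] by blast
    define nn where "nn i = int (b (v i)) - int (a (v i))" for i
    have e1: "(\<lambda>i. int (a (v i)) - int (b (v i))) = (\<lambda>i. - nn i)" by (auto simp: nn_def)
    have zs1: "(\<Sum>k\<in>Z. (int (a k) - int (b k)) *s k) = h"
    proof -
      have "(\<Sum>k\<in>Z. (int (a k) - int (b k)) *s k) = (\<Sum>k\<in>Z. (if k = h then 1 else 0) *s k)"
        by (rule sum.cong) (use h bz in auto)
      also have "\<dots> = h" using sum_delta_Zs[OF h(1), of 1] by simp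
      finally show ?thesis .
    qed
    show False
    proof (rule key[OF h(1)])
      show "(\<Sum>i\<in>UNIV. nn i) = 1" unfolding nn_def sum_int_diff using r True b0 by simp
      have "(\<Sum>i\<in>UNIV. a (v i)) = q" "(\<Sum>i\<in>UNIV. b (v i)) = q+1" using r True b0 by auto
      then show "(\<Sum>i\<in>UNIV. \<bar>nn i\<bar>) \<le> 2 * int q + 1" using ab_abs unfolding nn_def by (simp add: abs_minus_commute)
      show "piZ v nn = h" using r(3) unfolding e1 piZ_neg zs1 by (metis add.commute eq_neg_iff_add_eq_0 minus_minus)
      have "(\<Sum>k\<in>Z. (int (a k) - int (b k)) * nsq k) = (\<Sum>k\<in>Z. (if k = h then 1 else 0) * nsq k)"
        by (rule sum.cong) (use h bz in auto)
      then have "(\<Sum>k\<in>Z. (int (a k) - int (b k)) * nsq k) = nsq h"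
        using sum_delta_Z[OF h(1), of 1 nsq] by simp
      then show "wsq v nn = nsq h" using r(4) unfolding e1 wsq_neg by linarith
    qed
  next
    case False
    then have a0: "sum a Z = 0" and b1: "sum b Z = 1" using d by auto
    then have az: "\<forall>k\<in>Z. a k = 0" using finZ by auto
    obtain h where h: "h \<in> Z" "\<forall>k\<in>Z. b k = (if k = h then 1 else 0)" using sum_one_Z[OF finZ b1] by blast
    define nn where "nn i = int (a (v i)) - int (b (v i))" for i
    have zs1: "(\<Sum>k\<in>Z. (int (a k) - int (b k)) *s k) = - h"
    proof -
      have "(\<Sum>k\<in>Z. (int (a k) - int (b k)) *s k) = (\<Sum>k\<in>Z. (if k = h then -1 else 0) *s k)"
        by (rule sum.cong) (use h az in auto)
      also have "\<dots> = - h" using sum_delta_Zs[OF h(1), of "-1"] by (simp add: vec_eq_iff)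
      finally show ?thesis .
    qed
    show False
    proof (rule key[OF h(1)])
      show "(\<Sum>i\<in>UNIV. nn i) = 1" unfolding nn_def sum_int_diff using r b1 a0 by simp
      have "(\<Sum>i\<in>UNIV. a (v i)) = q+1" "(\<Sum>i\<in>UNIV. b (v i)) = q" using r b1 a0 by auto
      then show "(\<Sum>i\<in>UNIV. \<bar>nn i\<bar>) \<le> 2 * int q + 1" using ab_abs unfolding nn_def by simp
      show "piZ v nn = h" using r(3) unfolding zs1 nn_def by (simp add: eq_neg_iff_add_eq_0)
      have "(\<Sum>k\<in>Z. (int (a k) - int (b k)) * nsq k) = (\<Sum>k\<in>Z. (if k = h then -1 else 0) * nsq k)"
        by (rule sum.cong) (use h az in auto)
      then have "(\<Sum>k\<in>Z. (int (a k) - int (b k)) * nsq k) = - nsq h"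
        using sum_delta_Z[OF h(1), of "-1" nsq] by simp
      then show "wsq v nn = nsq h" using r(4) unfolding nn_def by linarith
    qed
  qed
qed

end


context L begin

definition "R0 = {ab \<in> RM q F. sum (fst ab) Z + sum (snd ab) Z = 0}"
definition "R23 = {ab \<in> RM q F. 2 \<le> sum (fst ab) Z + sum (snd ab) Z}"
definition "R2 = {ab \<in> RM q F. sum (fst ab) Z + sum (snd ab) Z = 2}"
definition "K r = {\<alpha>::'m \<Rightarrow> nat. sum \<alpha> UNIV = r}"
definition "val ab = coef (fst ab) (snd ab) * Zm (fst ab) (snd ab) * G (fst ab \<circ> v) (snd ab \<circ> v) 0"

lemma K_Apoly: "{k::'m \<Rightarrow> nat. (\<Sum>i\<in>UNIV. k i) = r} = K r" by (simp add: K_def)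

lemma finite_K: "finite (K r)"
  by (rule finite_subset[OF _ finite_bounded_nat[of r]]) (auto simp: K_def intro: member_le_sum[of _ UNIV, simplified])

lemma supp_lift0: "{k. lift v \<alpha> (\<lambda>_. 0) k \<noteq> 0} = v ` {i. \<alpha> i \<noteq> 0}"
  by (auto simp: lift_def dest: injD[OF dist])

lemma multinom_lift0: "multinom r (lift v \<alpha> (\<lambda>_. 0)) = multinom r \<alpha>"
proof -
  have "PF (lift v \<alpha> (\<lambda>_. 0)) = (\<Prod>k\<in>v ` {i. \<alpha> i \<noteq> 0}. fact (lift v \<alpha> (\<lambda>_. 0) k))"
    unfolding PF_def supp_lift0 ..
  also have "\<dots> = (\<Prod>i\<in>{i. \<alpha> i \<noteq> 0}. fact (lift v \<alpha> (\<lambda>_. 0) (v i)))"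
    by (simp add: prod.reindex[OF inj_on_subset[OF dist subset_UNIV]] o_def)
  also have "\<dots> = PF \<alpha>" by (simp add: PF_def)
  finally have "PF (lift v \<alpha> (\<lambda>_. 0)) = PF \<alpha>" .
  then show ?thesis by (simp add: multinom_PF)
qed

lemma UUB: "U i e * UB i e = w i e"
  unfolding U_def UB_def by (simp add: mult_ac cis_mult power2_eq_square[symmetric])

lemma G_diag: "G \<alpha> \<alpha> e = (\<Prod>i\<in>UNIV. w i e ^ \<alpha> i)"
  unfolding G_def prod.distrib[symmetric] by (simp add: power_mult_distrib[symmetric] UUB)

lemma lift0_RM: "sum \<alpha> UNIV = q+1 \<Longrightarrow> (lift v \<alpha> (\<lambda>_. 0), lift v \<alpha> (\<lambda>_. 0)) \<in> R0"
proof -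
  assume s: "sum \<alpha> UNIV = q+1"
  have z: "\<forall>k\<in>Z. lift v \<alpha> (\<lambda>_. 0) k = 0" using Zdisj by (simp add: lift_Z)
  then have sz: "sum (lift v \<alpha> (\<lambda>_. 0)) Z = 0" by simp
  have "(\<Sum>k\<in>Z. (int (lift v \<alpha> (\<lambda>_. 0) k) - int (lift v \<alpha> (\<lambda>_. 0) k)) *s k) = 0" by simp
  moreover have "\<forall>k. k \<notin> F \<longrightarrow> lift v \<alpha> (\<lambda>_. 0) k = 0" by (auto simp: F_def lift_def)
  ultimately have "(lift v \<alpha> (\<lambda>_. 0), lift v \<alpha> (\<lambda>_. 0)) \<in> RM q F"
    unfolding RM_iff using s sz by (simp add: piZ_def wsq_def)
  then show ?thesis unfolding R0_def using sz by simp
qed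

lemma sum_R0: "(\<Sum>ab\<in>R0. Tm ab e) = (\<Sum>\<alpha>\<in>K (q+1). of_nat (multinom (q+1) \<alpha> ^ 2) * (\<Prod>i\<in>UNIV. w i e ^ \<alpha> i))"
proof (rule sum.reindex_bij_witness[where i="\<lambda>\<alpha>. (lift v \<alpha> (\<lambda>_. 0), lift v \<alpha> (\<lambda>_. 0))" and j="\<lambda>ab. fst ab \<circ> v"])
  fix ab assume ab: "ab \<in> R0"
  obtain a b where abe: "ab = (a,b)" by (cases ab)
  have ab': "(a,b) \<in> RM q F" "sum a Z = 0" "sum b Z = 0" using ab abe by (auto simp: R0_def)
  note e = R0_eq[OF ab']
  show "(lift v (fst ab \<circ> v) (\<lambda>_. 0), lift v (fst ab \<circ> v) (\<lambda>_. 0)) = ab" using e abe by simp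
  have "sum (a \<circ> v) UNIV = q+1" using ab' by (simp add: RM_iff)
  then show "fst ab \<circ> v \<in> K (q+1)" using abe by (simp add: K_def)
  have "Tm ab e = coef a a * Zm a a * G (a \<circ> v) (a \<circ> v) e"
    using Tm_fact[of a b e] abe ab' e(1) by simp
  also have "Zm a a = 1" unfolding Zm_def using ab'(2) finZ by simp
  also have "coef a a = of_nat (multinom (q+1) (a \<circ> v) ^ 2)"
    unfolding coef_def using e(2) multinom_lift0 by (metis power2_eq_square)
  finally show "of_nat (multinom (q+1) (fst ab \<circ> v) ^ 2) * (\<Prod>i\<in>UNIV. w i e ^ (fst ab \<circ> v) i) = Tm ab e"
    using abe by (simp add: G_diag)
next
  fix \<alpha> assume "\<alpha> \<in> K (q+1)"
  then show "(lift v \<alpha> (\<lambda>_. 0), lift v \<alpha> (\<lambda>_. 0)) \<in> R0" using lift0_RM by (simp add: K_def)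
qed simp

lemma sum_split: "(\<Sum>ab\<in>RM q F. Tm ab e) = (\<Sum>ab\<in>R0. Tm ab e) + (\<Sum>ab\<in>R23. Tm ab e)"
proof -
  have "RM q F = R0 \<union> R23"
  proof safe
    fix a b assume ab: "(a,b) \<in> RM q F" "(a,b) \<notin> R23"
    then have "sum a Z + sum b Z \<noteq> 1" using R1_empty by blast
    then show "(a,b) \<in> R0" using ab by (auto simp: R0_def R23_def)
  qed (auto simp: R0_def R23_def)
  moreover have "R0 \<inter> R23 = {}" by (auto simp: R0_def R23_def)
  moreover have "finite R0" "finite R23" using finite_RM by (auto simp: R0_def R23_def)
  ultimately show ?thesis by (simp add: sum.union_disjoint)
qed

lemma sm_U: "sm (U i)" "sm (UB i)"
  unfolding U_def UB_def w_def using xipos ysm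
  by (auto intro!: sm_mult sm_csqrt sm_const)

lemma sm_G: "sm (G \<alpha> \<beta>)"
  unfolding G_def by (auto intro!: sm_mult sm_prod sm_power sm_U[unfolded sm_def, folded sm_def])

lemma D2_Tm23:
  assumes "ab \<in> R23"
  shows "D2 (Tm ab) 0 0 (if ab \<in> R2 then 2 * val ab else 0)"
proof -
  obtain a b where abe: "ab = (a,b)" by (cases ab)
  have d: "2 \<le> sum a Z + sum b Z" using assms abe by (simp add: R23_def)
  have eqT: "Tm ab = (\<lambda>e. (coef a b * Zm a b) * e ^ (sum a Z + sum b Z) * G (a \<circ> v) (b \<circ> v) e)"
    using abe by (auto simp: Tm_fact mult_ac)
  have "(ab \<in> R2) = (sum a Z + sum b Z = 2)" using assms abe by (auto simp: R2_def R23_def)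
  then have eqv: "(if ab \<in> R2 then 2 * val ab else 0) =
     (if sum a Z + sum b Z = 2 then 2 * (coef a b * Zm a b) * G (a \<circ> v) (b \<circ> v) 0 else 0)"
    by (simp add: val_def abe mult_ac)
  show ?thesis unfolding eqT eqv by (rule D2_mono[OF sm_G d])
qed

lemma D2_R23: "D2 (\<lambda>e. \<Sum>ab\<in>R23. Tm ab e) 0 0 (2 * (\<Sum>ab\<in>R2. val ab))"
proof -
  have "finite R23" using finite_RM by (auto simp: R23_def)
  from D2_sum[OF this D2_Tm23] have "D2 (\<lambda>e. \<Sum>ab\<in>R23. Tm ab e) 0 0 (\<Sum>ab\<in>R23. if ab \<in> R2 then 2 * val ab else 0)"
    by simp
  moreover have "(\<Sum>ab\<in>R23. if ab \<in> R2 then 2 * val ab else 0) = (\<Sum>ab\<in>R2. 2 * val ab)"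
  proof -
    have "R2 = {ab \<in> R23. ab \<in> R2}" by (auto simp: R2_def R23_def)
    then show ?thesis using sum.inter_filter[OF \<open>finite R23\<close>, of "\<lambda>ab. 2 * val ab" "\<lambda>ab. ab \<in> R2"] by simp
  qed
  ultimately show ?thesis by (simp add: sum_distrib_left)
qed

definition "xc i = complex_of_real (xi i)"

lemma fU: "finite (UNIV :: 'm set)" by simp

lemma D2_wpow: "D2 (\<lambda>e. w i e ^ n) (xc i ^ n) 0 (of_nat n * xc i ^ (n - 1) * (2 * y i))"
  using D2_power0[OF D2_w[of "xc i" "y i"]] unfolding w_def xc_def .

lemma D2_R0: "D2 (\<lambda>e. \<Sum>ab\<in>R0. Tm ab e)
   (\<Sum>\<alpha>\<in>K (q+1). of_nat (multinom (q+1) \<alpha> ^ 2) * (\<Prod>i\<in>UNIV. xc i ^ \<alpha> i)) 0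
   (\<Sum>\<alpha>\<in>K (q+1). of_nat (multinom (q+1) \<alpha> ^ 2) *
       (\<Sum>i\<in>UNIV. (of_nat (\<alpha> i) * xc i ^ (\<alpha> i - 1) * (2 * y i)) * (\<Prod>j\<in>UNIV-{i}. xc j ^ \<alpha> j)))"
proof -
  have P: "D2 (\<lambda>e. of_nat (multinom (q+1) \<alpha> ^ 2) * (\<Prod>i\<in>UNIV. w i e ^ \<alpha> i))
     (of_nat (multinom (q+1) \<alpha> ^ 2) * (\<Prod>i\<in>UNIV. xc i ^ \<alpha> i)) 0
     (of_nat (multinom (q+1) \<alpha> ^ 2) *
       (\<Sum>i\<in>UNIV. (of_nat (\<alpha> i) * xc i ^ (\<alpha> i - 1) * (2 * y i)) * (\<Prod>j\<in>UNIV-{i}. xc j ^ \<alpha> j)))" for \<alpha>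
    using D2_mult[OF D2_const D2_prod0[OF fU D2_wpow]] by simp
  have "D2 (\<lambda>e. \<Sum>\<alpha>\<in>K (q+1). of_nat (multinom (q+1) \<alpha> ^ 2) * (\<Prod>i\<in>UNIV. w i e ^ \<alpha> i))
   (\<Sum>\<alpha>\<in>K (q+1). of_nat (multinom (q+1) \<alpha> ^ 2) * (\<Prod>i\<in>UNIV. xc i ^ \<alpha> i)) (\<Sum>\<alpha>\<in>K (q+1). 0)
   (\<Sum>\<alpha>\<in>K (q+1). of_nat (multinom (q+1) \<alpha> ^ 2) *
       (\<Sum>i\<in>UNIV. (of_nat (\<alpha> i) * xc i ^ (\<alpha> i - 1) * (2 * y i)) * (\<Prod>j\<in>UNIV-{i}. xc j ^ \<alpha> j)))"
    by (rule D2_sum[OF finite_K P])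
  then show ?thesis unfolding sum_R0 by simp
qed

lemma D2_Quad: "D2 Quad (\<Sum>i\<in>UNIV. of_int (nsq (v i)) * xc i) 0
   ((\<Sum>i\<in>UNIV. of_int (nsq (v i)) * (2 * y i)) + 2 * (\<Sum>k\<in>Z. of_int (nsq k) * (z k * cnj (z k))))"
proof -
  have 1: "D2 (\<lambda>e. \<Sum>i\<in>UNIV. of_int (nsq (v i)) * w i e) (\<Sum>i\<in>UNIV. of_int (nsq (v i)) * xc i) 0
    (\<Sum>i\<in>UNIV. of_int (nsq (v i)) * (2 * y i))"
    using D2_sum[OF fU D2_mult[OF D2_const D2_w]] unfolding w_def xc_def by simp
  have 2: "D2 (\<lambda>e. e^2 * C) 0 0 (2 * C)" for C
    using D2_mult[OF D2_pow_id[of 2] D2_const[of C]] by simp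
  show ?thesis using D2_add[OF 1 2] unfolding Quad_eq[abs_def] by (simp add: add.assoc)
qed

lemma D2_f: "D2 (Hsub q v xi x y z)
   ((\<Sum>i\<in>UNIV. of_int (nsq (v i)) * xc i) + (\<Sum>\<alpha>\<in>K (q+1). of_nat (multinom (q+1) \<alpha> ^ 2) * (\<Prod>i\<in>UNIV. xc i ^ \<alpha> i))) 0
   (((\<Sum>i\<in>UNIV. of_int (nsq (v i)) * (2 * y i)) + 2 * (\<Sum>k\<in>Z. of_int (nsq k) * (z k * cnj (z k))))
    + (\<Sum>\<alpha>\<in>K (q+1). of_nat (multinom (q+1) \<alpha> ^ 2) *
       (\<Sum>i\<in>UNIV. (of_nat (\<alpha> i) * xc i ^ (\<alpha> i - 1) * (2 * y i)) * (\<Prod>j\<in>UNIV-{i}. xc j ^ \<alpha> j)))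
    + 2 * (\<Sum>ab\<in>R2. val ab))"
proof -
  have "Hsub q v xi x y z = (\<lambda>e. Quad e + ((\<Sum>ab\<in>R0. Tm ab e) + (\<Sum>ab\<in>R23. Tm ab e)))"
    by (auto simp: Hsub_eq sum_split)
  then show ?thesis using D2_add[OF D2_Quad D2_add[OF D2_R0 D2_R23]] by (simp add: add.assoc)
qed

end


lemma sqrt_pow_powr: "t > 0 \<Longrightarrow> sqrt t ^ m = t powr (real m / 2)"
proof -
  assume t: "t > 0"
  have "sqrt t ^ m = sqrt t powr real m" using t by (simp add: powr_realpow)
  also have "\<dots> = (t powr (1/2)) powr real m" using t by (simp add: powr_half_sqrt)
  also have "\<dots> = t powr (real m / 2)" by (simp add: powr_powr)
  finally show ?thesis .
qed

lemma sqrt_pow_split: "t > 0 \<Longrightarrow> sqrt t ^ (m + a + a) = t powr (real m / 2) * t ^ a"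
proof -
  assume t: "t > 0"
  have e: "m + a + a = m + 2 * a" by simp
  have "sqrt t ^ (m + a + a) = sqrt t ^ m * (sqrt t ^ 2) ^ a" unfolding e power_add power_mult ..
  then show ?thesis using t by (simp add: sqrt_pow_powr)
qed

lemma posp_negp: "int (posp l i) - int (negp l i) = l i"
  by (simp add: posp_def negp_def)

lemma min_pn: "min (posp l i + a) (negp l i + a) = a"
  by (simp add: posp_def negp_def)

lemma pn_diff:
  assumes "l = (\<lambda>i. int (\<alpha> i) - int (\<beta> i))"
  shows "posp l i + min (\<alpha> i) (\<beta> i) = \<alpha> i" "negp l i + min (\<alpha> i) (\<beta> i) = \<beta> i"
  using assms by (auto simp: posp_def negp_def)

lemma eta_pn: "eta l = int (\<Sum>i\<in>UNIV. posp l i) - int (\<Sum>i\<in>UNIV. negp l i)"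
proof -
  have "eta l = (\<Sum>i\<in>UNIV. int (posp l i) - int (negp l i))" unfolding eta_def by (simp add: posp_negp)
  then show ?thesis by (simp add: sum_subtractf)
qed

lemma inXq:
  fixes \<alpha> \<beta> :: "'m::finite \<Rightarrow> nat"
  assumes "sum \<alpha> UNIV + sum \<beta> UNIV = 2*q" "l = (\<lambda>i. int (\<alpha> i) - int (\<beta> i))"
    "l \<noteq> (\<lambda>i. 0)" "\<forall>i. l \<noteq> (\<lambda>j. if j = i then -2 else 0)" "eta l = 0 \<or> eta l = -2"
  shows "l \<in> Xq q"
  using repr[OF assms(1)] assms(2-5) unfolding Xq_def by auto

lemma eta_diff: "eta (\<lambda>i. int (\<alpha> i) - int (\<beta> i)) = int (sum \<alpha> UNIV) - int (sum \<beta> UNIV)"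
  unfolding eta_def by (rule sum_int_diff)

lemma ind_empty[simp]: "ind {} = (\<lambda>_. 0)" by (simp add: ind_def fun_eq_iff)

context L begin

lemma U0: "U i 0 = of_real (sqrt (xi i)) * cis (x i)" "UB i 0 = of_real (sqrt (xi i)) * cis (- x i)"
  using xipos by (auto simp: U_def UB_def w_def less_imp_le)

lemma G0: "G \<alpha> \<beta> 0 = of_real (\<Prod>i\<in>UNIV. sqrt (xi i) ^ (\<alpha> i + \<beta> i)) * cis (\<Sum>i\<in>UNIV. (real (\<alpha> i) - real (\<beta> i)) * x i)"
proof -
  have "G \<alpha> \<beta> 0 = (\<Prod>i\<in>UNIV. of_real (sqrt (xi i) ^ (\<alpha> i + \<beta> i)) * cis ((real (\<alpha> i) - real (\<beta> i)) * x i))"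
  proof -
    have c: "cis t ^ a * cis (- t) ^ b = cis ((real a - real b) * t)" for t and a b :: nat
      unfolding Complex.DeMoivre cis_mult by (rule arg_cong[where f=cis]) (simp add: algebra_simps)
    have f: "(of_real s * cis t) ^ a * (of_real s * cis (- t)) ^ b = of_real (s ^ (a + b)) * cis ((real a - real b) * t)"
      for s t and a b :: nat
      using c[of t a b] by (simp add: power_mult_distrib power_add mult_ac)
    show ?thesis unfolding G_def U0 prod.distrib[symmetric] f ..
  qed
  also have "\<dots> = of_real (\<Prod>i\<in>UNIV. sqrt (xi i) ^ (\<alpha> i + \<beta> i)) * cis (\<Sum>i\<in>UNIV. (real (\<alpha> i) - real (\<beta> i)) * x i)"
    by (simp add: prod.distrib prod_cis)
  finally show ?thesis .
qed

lemma G0_pn: "G (\<lambda>i. posp l i + a i) (\<lambda>i. negp l i + a i) 0 =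
   of_real (xihalf xi l * (\<Prod>i\<in>UNIV. xi i ^ a i)) * cis (lx l x)"
proof -
  have "(\<Prod>i\<in>UNIV. sqrt (xi i) ^ (posp l i + a i + (negp l i + a i))) = xihalf xi l * (\<Prod>i\<in>UNIV. xi i ^ a i)"
    unfolding xihalf_def prod.distrib[symmetric]
  proof (rule prod.cong[OF refl])
    fix i
    have e: "posp l i + a i + (negp l i + a i) = (posp l i + negp l i) + a i + a i" by simp
    show "sqrt (xi i) ^ (posp l i + a i + (negp l i + a i)) = xi i powr (real (posp l i + negp l i) / 2) * xi i ^ a i"
      unfolding e by (rule sqrt_pow_split) (use xipos in auto)
  qed
  moreover have "(\<Sum>i\<in>UNIV. (real (posp l i + a i) - real (negp l i + a i)) * x i) = lx l x"
    unfolding lx_def by (rule sum.cong) (auto simp: posp_def negp_def)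
  ultimately show ?thesis unfolding G0 by simp
qed

lemma G0_diag: "G \<alpha> \<alpha> 0 = (\<Prod>i\<in>UNIV. xc i ^ \<alpha> i)"
  unfolding G_diag w_def xc_def by simp

lemma supp_lift_ind: "p \<subseteq> Z \<Longrightarrow> {k. lift v \<alpha> (ind p) k \<noteq> 0} = v ` {i. \<alpha> i \<noteq> 0} \<union> p"
  using Zdisj by (auto simp: lift_def ind_def dest: injD[OF dist])

lemma PF_lift_ind:
  assumes "p \<subseteq> Z"
  shows "PF (lift v \<alpha> (ind p)) = PF \<alpha>"
proof -
  have fp: "finite p" using finite_subset[OF assms finZ] .
  have disj: "v ` {i. \<alpha> i \<noteq> 0} \<inter> p = {}" using assms Zdisj by auto
  have "PF (lift v \<alpha> (ind p)) = (\<Prod>k\<in>v ` {i. \<alpha> i \<noteq> 0}. fact (lift v \<alpha> (ind p) k)) * (\<Prod>k\<in>p. fact (lift v \<alpha> (ind p) k))"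
    unfolding PF_def supp_lift_ind[OF assms] by (rule prod.union_disjoint) (use fp disj in auto)
  also have "(\<Prod>k\<in>p. fact (lift v \<alpha> (ind p) k)) = (1::nat)"
    by (rule prod.neutral) (use assms Zdisj in \<open>auto simp: lift_Z ind_def\<close>)
  also have "(\<Prod>k\<in>v ` {i. \<alpha> i \<noteq> 0}. fact (lift v \<alpha> (ind p) k)) = PF \<alpha>"
    by (simp add: prod.reindex[OF inj_on_subset[OF dist subset_UNIV]] o_def PF_def)
  finally show ?thesis by simp
qed

lemma multinom_lift: "p \<subseteq> Z \<Longrightarrow> multinom r (lift v \<alpha> (ind p)) = fact r div PF \<alpha>"
  by (simp add: multinom_PF PF_lift_ind)

lemma multinom_lift1:
  assumes "p \<subseteq> Z" "sum \<alpha> UNIV = n"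
  shows "multinom (Suc n) (lift v \<alpha> (ind p)) = Suc n * multinom n \<alpha>"
proof -
  have d: "PF \<alpha> dvd fact n" using PF_dvd[of \<alpha>] assms by simp
  have "fact (Suc n) div PF \<alpha> = (Suc n * fact n) div PF \<alpha>" by simp
  also have "\<dots> = Suc n * (fact n div PF \<alpha>)" by (rule div_mult_swap[OF d, symmetric])
  finally show ?thesis unfolding multinom_PF PF_lift_ind[OF assms(1)] .
qed

lemma multinom_lift2:
  assumes "p \<subseteq> Z" "sum \<alpha> UNIV = n"
  shows "multinom (Suc (Suc n)) (lift v \<alpha> (ind p)) = Suc (Suc n) * Suc n * multinom n \<alpha>"
proof -
  have d: "PF \<alpha> dvd fact n" using PF_dvd[of \<alpha>] assms by simp
  have "fact (Suc (Suc n)) div PF \<alpha> = (Suc (Suc n) * Suc n * fact n) div PF \<alpha>" by (simp add: algebra_simps)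
  also have "\<dots> = Suc (Suc n) * Suc n * (fact n div PF \<alpha>)" by (rule div_mult_swap[OF d, symmetric])
  finally show ?thesis unfolding multinom_PF PF_lift_ind[OF assms(1)] .
qed

lemma Zprod_ind: "p \<subseteq> Z \<Longrightarrow> (\<Prod>k\<in>Z. c k ^ lift v \<alpha> (ind p) k) = (\<Prod>k\<in>p. c k)"
proof -
  assume p: "p \<subseteq> Z"
  have "(\<Prod>k\<in>Z. c k ^ lift v \<alpha> (ind p) k) = (\<Prod>k\<in>Z. if k \<in> p then c k else 1)"
    by (rule prod.cong) (use Zdisj in \<open>auto simp: lift_Z ind_def\<close>)
  also have "\<dots> = prod c {k \<in> Z. k \<in> p}" by (rule prod.inter_filter[OF finZ, symmetric])
  also have "{k \<in> Z. k \<in> p} = p" using p by auto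
  finally show ?thesis .
qed

lemma Zsum_ind: "p \<subseteq> Z \<Longrightarrow> sum (lift v \<alpha> (ind p)) Z = card p"
proof -
  assume p: "p \<subseteq> Z"
  have "sum (lift v \<alpha> (ind p)) Z = (\<Sum>k\<in>Z. if k \<in> p then 1 else 0)"
    by (rule sum.cong) (use Zdisj in \<open>auto simp: lift_Z ind_def\<close>)
  also have "\<dots> = card {k \<in> Z. k \<in> p}" using finZ by (simp add: sum.inter_filter[symmetric])
  also have "{k \<in> Z. k \<in> p} = p" using p by auto
  finally show ?thesis .
qed

lemma Zmom_ind:
  assumes "p \<subseteq> Z" "p' \<subseteq> Z"
  shows "(\<Sum>k\<in>Z. (int (lift v \<alpha> (ind p) k) - int (lift v \<beta> (ind p') k)) *s k) = sum (\<lambda>k. k) p - sum (\<lambda>k. k) p'"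
    "(\<Sum>k\<in>Z. (int (lift v \<alpha> (ind p) k) - int (lift v \<beta> (ind p') k)) * nsq k) = sum nsq p - sum nsq p'"
proof -
  have e1: "(\<Sum>k\<in>Z. (int (lift v \<alpha> (ind p) k) - int (lift v \<beta> (ind p') k)) *s k) =
     (\<Sum>k\<in>Z. (if k \<in> p then k else 0)) - (\<Sum>k\<in>Z. (if k \<in> p' then k else 0))"
    unfolding sum_subtractf[symmetric]
    by (rule sum.cong) (use Zdisj in \<open>auto simp: lift_Z ind_def vec_eq_iff algebra_simps\<close>)
  have e2: "(\<Sum>k\<in>Z. (int (lift v \<alpha> (ind p) k) - int (lift v \<beta> (ind p') k)) * nsq k) =
     (\<Sum>k\<in>Z. (if k \<in> p then nsq k else 0)) - (\<Sum>k\<in>Z. (if k \<in> p' then nsq k else 0))"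
    unfolding sum_subtractf[symmetric]
    by (rule sum.cong) (use Zdisj in \<open>auto simp: lift_Z ind_def\<close>)
  have "{k \<in> Z. k \<in> p} = p" "{k \<in> Z. k \<in> p'} = p'" using assms by auto
  then show "(\<Sum>k\<in>Z. (int (lift v \<alpha> (ind p) k) - int (lift v \<beta> (ind p') k)) *s k) = sum (\<lambda>k. k) p - sum (\<lambda>k. k) p'"
    "(\<Sum>k\<in>Z. (int (lift v \<alpha> (ind p) k) - int (lift v \<beta> (ind p') k)) * nsq k) = sum nsq p - sum nsq p'"
    unfolding e1 e2 using finZ by (simp_all add: sum.inter_filter[symmetric])
qed

lemma RM_lift:
  assumes "p \<subseteq> Z" "p' \<subseteq> Z"
  shows "(lift v \<alpha> (ind p), lift v \<beta> (ind p')) \<in> RM q F \<longleftrightarrow>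
     sum \<alpha> UNIV + card p = q+1 \<and> sum \<beta> UNIV + card p' = q+1
   \<and> piZ v (\<lambda>i. int (\<alpha> i) - int (\<beta> i)) + sum (\<lambda>k. k) p - sum (\<lambda>k. k) p' = 0
   \<and> wsq v (\<lambda>i. int (\<alpha> i) - int (\<beta> i)) + sum nsq p - sum nsq p' = 0"
proof -
  have s: "\<forall>k. k \<notin> F \<longrightarrow> lift v \<gamma> (ind r) k = 0" if "r \<subseteq> Z" for \<gamma> r
    using that by (auto simp: F_def lift_def ind_def)
  show ?thesis unfolding RM_iff Zmom_ind[OF assms] Zsum_ind[OF assms(1)] Zsum_ind[OF assms(2)]
    using s[OF assms(1)] s[OF assms(2)] by (simp add: algebra_simps)
qed

lemma decomp_ind:
  assumes "\<forall>k. k \<notin> F \<longrightarrow> a k = 0" "p \<subseteq> Z" "\<forall>k\<in>Z. a k = ind p k"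
  shows "a = lift v (a \<circ> v) (ind p)"
proof (rule lift_ext, intro allI impI)
  fix k assume k: "k \<notin> range v"
  show "a k = ind p k"
  proof (cases "k \<in> Z")
    case False then show ?thesis using assms k by (auto simp: F_def ind_def)
  qed (use assms in auto)
qed

lemma val_lift:
  assumes "p \<subseteq> Z" "p' \<subseteq> Z"
  shows "val (lift v \<alpha> (ind p), lift v \<beta> (ind p')) =
    of_nat (multinom (q+1) (lift v \<alpha> (ind p)) * multinom (q+1) (lift v \<beta> (ind p'))) *
    ((\<Prod>k\<in>p. z k) * (\<Prod>k\<in>p'. cnj (z k))) * G \<alpha> \<beta> 0"
  unfolding val_def coef_def Zm_def fst_conv snd_conv Zprod_ind[OF assms(1)] Zprod_ind[OF assms(2)] lift_comp ..

lemma no_double: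
  assumes "sum \<alpha> UNIV = q - 1" "sum \<beta> UNIV = q + 1" "h \<in> Z"
    and mom: "piZ v (\<lambda>i. int (\<alpha> i) - int (\<beta> i)) + 2 *s h = 0"
    and en: "wsq v (\<lambda>i. int (\<alpha> i) - int (\<beta> i)) + 2 * nsq h = 0"
  shows False
proof -
  define l where "l = (\<lambda>i. int (\<alpha> i) - int (\<beta> i))"
  have eta: "eta l = -2" unfolding l_def eta_diff using assms(1,2) q1 by simp
  show False
  proof (cases "\<exists>i. l = (\<lambda>j. if j = i then -2 else 0)")
    case True
    then obtain i where li: "l = (\<lambda>j. if j = i then -2 else 0)" by blast
    have "piZ v l = (-2) *s v i"
    proof -
      have "piZ v l = (\<Sum>j\<in>UNIV. if j = i then (-2) *s v j else 0)"
        unfolding piZ_def li by (rule sum.cong) auto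
      then show ?thesis by simp
    qed
    then have "(-2) *s v i + 2 *s h = 0" using mom l_def by simp
    then have "h = v i" by (simp add: vec_eq_iff)
    then show False using Zdisj[OF assms(3)] by auto
  next
    case False
    have l0: "l \<noteq> (\<lambda>i. 0)" using eta by (auto simp: eta_def)
    have "l \<in> Xq q"
      by (rule inXq[of \<alpha> \<beta>]) (use assms(1,2) q1 False eta l_def l0 in auto)
    then have "l \<in> Xq2 q" using eta by (simp add: Xq2_def)
    then have ne: "2 * wsq v l + nsq (piZ v l) \<noteq> 0" using H4 by blast
    have "piZ v l = (-2) *s h" using mom l_def by (simp add: vec_eq_iff eq_neg_iff_add_eq_0)
    then have "nsq (piZ v l) = 4 * nsq h" by (simp add: nsq_scale)
    moreover have "wsq v l = -2 * nsq h" using en l_def by simp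
    ultimately show False using ne by simp
  qed
qed

lemma not_m2:
  assumes hk: "h \<noteq> k" and mom: "piZ v l + h + k = 0" and en: "wsq v l + nsq h + nsq k = 0"
  shows "l \<noteq> (\<lambda>j. if j = i then -2 else 0)"
proof
  assume li: "l = (\<lambda>j. if j = i then -2 else 0)"
  have "piZ v l = (\<Sum>j\<in>UNIV. if j = i then (-2) *s v j else 0)"
    unfolding piZ_def li by (rule sum.cong) auto
  then have p: "piZ v l = (-2) *s v i" by simp
  have "wsq v l = (\<Sum>j\<in>UNIV. if j = i then -2 * nsq (v j) else 0)"
    unfolding wsq_def li by (rule sum.cong) auto
  then have w: "wsq v l = -2 * nsq (v i)" by simp
  have "h + k = 2 *s v i" using mom p by (simp add: vec_eq_iff algebra_simps)
  then have "nsq (h + k) = 4 * nsq (v i)" by (simp add: nsq_scale)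
  moreover have "nsq h + nsq k = 2 * nsq (v i)" using en w by simp
  ultimately have "nsq (h - k) = 0" using nsq_parallel[of h k] by simp
  then have "h - k = 0" by (rule nsq_zero)
  then have "h = k" by simp
  then show False using hk by simp
qed

end


context L begin

definition "A0 l = {a::'m \<Rightarrow> nat. (\<Sum>i\<in>UNIV. a i + posp l i) = q}"
definition "A2 l = {a::'m \<Rightarrow> nat. (\<Sum>i\<in>UNIV. a i + posp l i) = q - 1}"
definition "P0' l = P0 v l \<inter> (Z \<times> Z)"
definition "P2' l = {p \<in> P2 v l. p \<subseteq> Z}"
definition "W0 = (SIGMA l:Xq0 q. SIGMA a:A0 l. P0' l)"
definition "W2 = (SIGMA l:Xq2 q. SIGMA a:A2 l. P2' l)"
definition "M0 l a = real ((q+1)^2) * xihalf xi l * (real (multinom q (\<lambda>i. posp l i + a i)) * real (multinom q (\<lambda>i. negp l i + a i))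
        * (\<Prod>i\<in>UNIV. xi i ^ a i))"
definition "M2 l a = real ((q+1)*q) * xihalf xi l * (real (multinom (q+1) (\<lambda>i. negp l i + a i)) * real (multinom (q-1) (\<lambda>i. posp l i + a i))
        * (\<Prod>i\<in>UNIV. xi i ^ a i))"

lemma bound_apl: "(a::'m \<Rightarrow> nat) i \<le> (\<Sum>j\<in>UNIV. a j + posp l j)"
proof -
  have "a i \<le> a i + posp l i" by simp
  also have "\<dots> \<le> (\<Sum>j\<in>UNIV. a j + posp l j)" by (rule member_le_sum[of i UNIV "\<lambda>j. a j + posp l j"]) auto
  finally show ?thesis .
qed

lemma finite_A: "finite (A0 l)" "finite (A2 l)"
proof -
  have "A0 l \<subseteq> {a. \<forall>i. a i \<le> q}" by (auto simp: A0_def intro: bound_apl[THEN order_trans])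
  then show "finite (A0 l)" using finite_subset finite_bounded_nat by blast
  have "A2 l \<subseteq> {a. \<forall>i. a i \<le> q - 1}" by (auto simp: A2_def) (metis bound_apl)
  then show "finite (A2 l)" using finite_subset finite_bounded_nat by blast
qed

lemma sum3: "finite A \<Longrightarrow> (\<And>x. x \<in> A \<Longrightarrow> finite (B x)) \<Longrightarrow> (\<And>x y. x \<in> A \<Longrightarrow> y \<in> B x \<Longrightarrow> finite (C x y)) \<Longrightarrow>
  (\<Sum>x\<in>A. \<Sum>y\<in>B x. \<Sum>t\<in>C x y. f x y t) = (\<Sum>(x,y,t)\<in>(SIGMA x:A. SIGMA y:B x. C x y). f x y t)"
proof -
  assume fa: "finite A" and fb: "\<And>x. x \<in> A \<Longrightarrow> finite (B x)" and fc: "\<And>x y. x \<in> A \<Longrightarrow> y \<in> B x \<Longrightarrow> finite (C x y)"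
  have "(\<Sum>x\<in>A. \<Sum>y\<in>B x. \<Sum>t\<in>C x y. f x y t) = (\<Sum>x\<in>A. \<Sum>(y,t)\<in>(SIGMA y:B x. C x y). f x y t)"
    by (rule sum.cong[OF refl], rule sum.Sigma) (use fb fc in auto)
  also have "\<dots> = (\<Sum>(x,yw)\<in>(SIGMA x:A. SIGMA y:B x. C x y). case yw of (y,t) \<Rightarrow> f x y t)"
    by (rule sum.Sigma) (use fa fb fc in \<open>auto intro!: finite_SigmaI\<close>)
  finally show ?thesis by (simp add: case_prod_unfold)
qed

lemma finite_P: "finite (P0' l)" "finite (P2' l)"
proof -
  show "finite (P0' l)" by (rule finite_subset[of _ "Z \<times> Z"]) (use finZ in \<open>auto simp: P0'_def\<close>)
  show "finite (P2' l)" by (rule finite_subset[of _ "Pow Z"]) (use finZ in \<open>auto simp: P2'_def\<close>)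
qed

lemma finite_Xq02: "finite (Xq0 q :: ('m \<Rightarrow> int) set)" "finite (Xq2 q :: ('m \<Rightarrow> int) set)"
  using finite_Xq[of q] by (auto simp: Xq0_def Xq2_def)

lemma c0_sum: "c0 q xi l = (\<Sum>a\<in>A0 l. M0 l a)"
  unfolding c0_def M0_def A0_def by (simp add: sum_distrib_left)

lemma c2_sum: "c2 q xi l = (\<Sum>a\<in>A2 l. M2 l a)"
  unfolding c2_def M2_def A2_def by (simp add: sum_distrib_left)

lemma Qform_split: "Qform q v xi x z =
   (\<Sum>(l,a,hk)\<in>W0. of_real (M0 l a) * cis (lx l x) * (z (fst hk) * cnj (z (snd hk))))
 + (\<Sum>(l,a,p)\<in>W2. of_real (M2 l a) * (cis (lx l x) * (\<Prod>h\<in>p. z h)))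
 + (\<Sum>(l,a,p)\<in>W2. of_real (M2 l a) * (cis (- lx l x) * (\<Prod>h\<in>p. cnj (z h))))"
proof -
  have 1: "(\<Sum>l\<in>Xq0 q. of_real (c0 q xi l) * cis (lx l x) *
        (\<Sum>(h,k)\<in>P0 v l \<inter> ({k. z k \<noteq> 0} \<times> {k. z k \<noteq> 0}). z h * cnj (z k))) =
      (\<Sum>(l,a,hk)\<in>W0. of_real (M0 l a) * cis (lx l x) * (z (fst hk) * cnj (z (snd hk))))"
  proof -
    have "(\<Sum>l\<in>Xq0 q. of_real (c0 q xi l) * cis (lx l x) *
        (\<Sum>(h,k)\<in>P0 v l \<inter> ({k. z k \<noteq> 0} \<times> {k. z k \<noteq> 0}). z h * cnj (z k))) =
        (\<Sum>l\<in>Xq0 q. \<Sum>a\<in>A0 l. \<Sum>hk\<in>P0' l. of_real (M0 l a) * cis (lx l x) * (z (fst hk) * cnj (z (snd hk))))"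
    proof (rule sum.cong[OF refl])
      fix l
      show "of_real (c0 q xi l) * cis (lx l x) * (\<Sum>(h,k)\<in>P0 v l \<inter> ({k. z k \<noteq> 0} \<times> {k. z k \<noteq> 0}). z h * cnj (z k)) =
        (\<Sum>a\<in>A0 l. \<Sum>hk\<in>P0' l. of_real (M0 l a) * cis (lx l x) * (z (fst hk) * cnj (z (snd hk))))"
        unfolding c0_sum of_real_sum sum_distrib_right P0'_def Z_def
        by (simp add: sum_distrib_left case_prod_unfold)
    qed
    also have "\<dots> = (\<Sum>(l,a,hk)\<in>W0. of_real (M0 l a) * cis (lx l x) * (z (fst hk) * cnj (z (snd hk))))"
      unfolding W0_def by (rule sum3) (auto simp: finite_Xq02 finite_A finite_P)
    finally show ?thesis .
  qed
  have 2: "of_real (c2 q xi l) * (\<Sum>p\<in>{p\<in>P2 v l. p \<subseteq> {k. z k \<noteq> 0}}.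
            cis (lx l x) * (\<Prod>h\<in>p. z h) + cis (- lx l x) * (\<Prod>h\<in>p. cnj (z h))) =
      (\<Sum>a\<in>A2 l. \<Sum>p\<in>P2' l. of_real (M2 l a) * (cis (lx l x) * (\<Prod>h\<in>p. z h))) +
      (\<Sum>a\<in>A2 l. \<Sum>p\<in>P2' l. of_real (M2 l a) * (cis (- lx l x) * (\<Prod>h\<in>p. cnj (z h))))" for l
  proof -
    have "of_real (c2 q xi l) * (\<Sum>p\<in>{p\<in>P2 v l. p \<subseteq> {k. z k \<noteq> 0}}.
            cis (lx l x) * (\<Prod>h\<in>p. z h) + cis (- lx l x) * (\<Prod>h\<in>p. cnj (z h))) =
       (\<Sum>a\<in>A2 l. \<Sum>p\<in>P2' l. of_real (M2 l a) * (cis (lx l x) * (\<Prod>h\<in>p. z h)) +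
           of_real (M2 l a) * (cis (- lx l x) * (\<Prod>h\<in>p. cnj (z h))))"
      unfolding c2_sum of_real_sum sum_distrib_right P2'_def Z_def by (simp add: sum_distrib_left algebra_simps)
    then show ?thesis by (simp only: sum.distrib)
  qed
  have S: "(\<Sum>l\<in>Xq2 q. \<Sum>a\<in>A2 l. \<Sum>p\<in>P2' l. g l a p) = (\<Sum>(l,a,p)\<in>W2. g l a p)" for g :: "_ \<Rightarrow> _ \<Rightarrow> _ \<Rightarrow> complex"
    unfolding W2_def by (rule sum3) (auto simp: finite_Xq02 finite_A finite_P)
  have X: "(\<Sum>l\<in>Xq2 q. of_real (c2 q xi l) * (\<Sum>p\<in>{p\<in>P2 v l. p \<subseteq> {k. z k \<noteq> 0}}.
            cis (lx l x) * (\<Prod>h\<in>p. z h) + cis (- lx l x) * (\<Prod>h\<in>p. cnj (z h)))) =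
      (\<Sum>l\<in>Xq2 q. (\<Sum>a\<in>A2 l. \<Sum>p\<in>P2' l. of_real (M2 l a) * (cis (lx l x) * (\<Prod>h\<in>p. z h))) +
      (\<Sum>a\<in>A2 l. \<Sum>p\<in>P2' l. of_real (M2 l a) * (cis (- lx l x) * (\<Prod>h\<in>p. cnj (z h)))))"
    by (rule sum.cong[OF refl]) (rule 2)
  show ?thesis unfolding Qform_def 1 X sum.distrib[of _ _ "Xq2 q"] S by (simp add: add.assoc)
qed

end


context L begin

definition "hp a = (SOME h. h \<in> Z \<and> a h \<noteq> 0)"
definition "R11d = {ab \<in> R2. sum (fst ab) Z = 1 \<and> fst ab \<circ> v = snd ab \<circ> v}"
definition "R11o = {ab \<in> R2. sum (fst ab) Z = 1 \<and> fst ab \<circ> v \<noteq> snd ab \<circ> v}"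
definition "R20 = {ab \<in> R2. sum (fst ab) Z = 2}"
definition "R02 = {ab \<in> R2. sum (fst ab) Z = 0}"

lemma finite_R2: "finite R2" using finite_RM by (simp add: R2_def)

lemma R2_split: "(\<Sum>ab\<in>R2. val ab) = (\<Sum>ab\<in>R11d. val ab) + (\<Sum>ab\<in>R11o. val ab) + (\<Sum>ab\<in>R20. val ab) + (\<Sum>ab\<in>R02. val ab)"
proof -
  have e: "val ab = (if ab \<in> R11d then val ab else 0) + (if ab \<in> R11o then val ab else 0)
     + (if ab \<in> R20 then val ab else 0) + (if ab \<in> R02 then val ab else 0)" if "ab \<in> R2" for ab
  proof -
    have "sum (fst ab) Z \<le> 2" using that by (auto simp: R2_def)
    then have "sum (fst ab) Z = 0 \<or> sum (fst ab) Z = 1 \<or> sum (fst ab) Z = 2" by auto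
    then show ?thesis using that by (auto simp: R11d_def R11o_def R20_def R02_def)
  qed
  have "(\<Sum>ab\<in>R2. val ab) = (\<Sum>ab\<in>R2. (if ab \<in> R11d then val ab else 0) + (if ab \<in> R11o then val ab else 0)
     + (if ab \<in> R20 then val ab else 0) + (if ab \<in> R02 then val ab else 0))"
    by (rule sum.cong[OF refl]) (rule e)
  also have "\<dots> = (\<Sum>ab\<in>R2. if ab \<in> R11d then val ab else 0) + (\<Sum>ab\<in>R2. if ab \<in> R11o then val ab else 0)
     + (\<Sum>ab\<in>R2. if ab \<in> R20 then val ab else 0) + (\<Sum>ab\<in>R2. if ab \<in> R02 then val ab else 0)"
    by (simp add: sum.distrib)
  also have "\<dots> = (\<Sum>ab\<in>R11d. val ab) + (\<Sum>ab\<in>R11o. val ab) + (\<Sum>ab\<in>R20. val ab) + (\<Sum>ab\<in>R02. val ab)"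
  proof -
    have s: "(\<Sum>ab\<in>R2. if ab \<in> S then val ab else 0) = (\<Sum>ab\<in>S. val ab)" if "S \<subseteq> R2" for S
    proof -
      have "S = {ab \<in> R2. ab \<in> S}" using that by auto
      then show ?thesis using sum.inter_filter[OF finite_R2, of val "\<lambda>ab. ab \<in> S"] by simp
    qed
    have "R11d \<subseteq> R2" "R11o \<subseteq> R2" "R20 \<subseteq> R2" "R02 \<subseteq> R2" by (auto simp: R11d_def R11o_def R20_def R02_def)
    then show ?thesis by (simp only: s)
  qed
  finally show ?thesis .
qed

lemma hp_ind: "h \<in> Z \<Longrightarrow> \<forall>k\<in>Z. a k = ind {h} k \<Longrightarrow> hp a = h"
  unfolding hp_def by (rule some_equality) (auto simp: ind_def split: if_splits)

lemma hp_lift: "h \<in> Z \<Longrightarrow> hp (lift v \<alpha> (ind {h})) = h"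
  by (rule hp_ind) (use Zdisj in \<open>auto simp: lift_Z\<close>)

lemma one_side:
  assumes "\<forall>k. k \<notin> F \<longrightarrow> a k = 0" "sum a Z = 1"
  shows "hp a \<in> Z" "a = lift v (a \<circ> v) (ind {hp a})"
proof -
  obtain h where h: "h \<in> Z" "\<forall>k\<in>Z. a k = (if k = h then 1 else 0)" using sum_one_Z[OF finZ assms(2)] by blast
  have i: "\<forall>k\<in>Z. a k = ind {h} k" using h by (auto simp: ind_def)
  have "hp a = h" by (rule hp_ind[OF h(1) i])
  then show "hp a \<in> Z" "a = lift v (a \<circ> v) (ind {hp a})" using h(1) decomp_ind[OF assms(1) _ i] by auto
qed

lemma R11_struct:
  assumes ab: "(a,b) \<in> R2" "sum a Z = 1"
  shows "hp a \<in> Z" "hp b \<in> Z" "a = lift v (a \<circ> v) (ind {hp a})" "b = lift v (b \<circ> v) (ind {hp b})"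
    "sum (a \<circ> v) UNIV = q" "sum (b \<circ> v) UNIV = q"
    "piZ v (\<lambda>i. int (a (v i)) - int (b (v i))) + hp a - hp b = 0"
    "wsq v (\<lambda>i. int (a (v i)) - int (b (v i))) + nsq (hp a) - nsq (hp b) = 0"
proof -
  have rm: "(a,b) \<in> RM q F" and sb: "sum b Z = 1" using ab by (auto simp: R2_def)
  have sa: "\<forall>k. k \<notin> F \<longrightarrow> a k = 0" "\<forall>k. k \<notin> F \<longrightarrow> b k = 0" using rm by (auto simp: RM_iff)
  note A = one_side[OF sa(1) ab(2)] and B = one_side[OF sa(2) sb]
  show "hp a \<in> Z" "hp b \<in> Z" "a = lift v (a \<circ> v) (ind {hp a})" "b = lift v (b \<circ> v) (ind {hp b})" using A B by auto
  define \<alpha> where "\<alpha> = a \<circ> v"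
  define \<beta> where "\<beta> = b \<circ> v"
  have "(lift v \<alpha> (ind {hp a}), lift v \<beta> (ind {hp b})) \<in> RM q F"
    using rm A(2) B(2) unfolding \<alpha>_def \<beta>_def by metis
  then have r: "sum \<alpha> UNIV + 1 = q+1" "sum \<beta> UNIV + 1 = q+1"
    "piZ v (\<lambda>i. int (\<alpha> i) - int (\<beta> i)) + hp a - hp b = 0"
    "wsq v (\<lambda>i. int (\<alpha> i) - int (\<beta> i)) + nsq (hp a) - nsq (hp b) = 0"
    unfolding RM_lift[OF _ ] using A(1) B(1) by (auto simp: RM_lift)
  then show "sum (a \<circ> v) UNIV = q" "sum (b \<circ> v) UNIV = q"
    "piZ v (\<lambda>i. int (a (v i)) - int (b (v i))) + hp a - hp b = 0"
    "wsq v (\<lambda>i. int (a (v i)) - int (b (v i))) + nsq (hp a) - nsq (hp b) = 0"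
    unfolding \<alpha>_def \<beta>_def by auto
qed

lemma piZ_zero: "piZ v (\<lambda>i. 0) = 0" by (simp add: piZ_def)
lemma wsq_zero: "wsq v (\<lambda>i. 0) = 0" by (simp add: wsq_def)

lemma sum_R11d: "(\<Sum>ab\<in>R11d. val ab) = (\<Sum>(h,\<alpha>)\<in>Z \<times> K q. of_nat (Suc q * multinom q \<alpha> * (Suc q * multinom q \<alpha>)) * (z h * cnj (z h)) * (\<Prod>i\<in>UNIV. xc i ^ \<alpha> i))"
proof (rule sum.reindex_bij_witness[symmetric, where j="\<lambda>(h,\<alpha>). (lift v \<alpha> (ind {h}), lift v \<alpha> (ind {h}))"
      and i="\<lambda>ab. (hp (fst ab), fst ab \<circ> v)"])
  fix w assume w: "w \<in> Z \<times> K q"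
  obtain h \<alpha> where we: "w = (h,\<alpha>)" by (cases w)
  have h: "h \<in> Z" "sum \<alpha> UNIV = q" using w we by (auto simp: K_def)
  show "(\<lambda>ab. (hp (fst ab), fst ab \<circ> v)) ((\<lambda>(h,\<alpha>). (lift v \<alpha> (ind {h}), lift v \<alpha> (ind {h}))) w) = w"
    using we hp_lift[OF h(1)] by simp
  have hs: "{h} \<subseteq> Z" using h by simp
  have "(lift v \<alpha> (ind {h}), lift v \<alpha> (ind {h})) \<in> RM q F"
    unfolding RM_lift[OF hs hs] using h by (simp add: piZ_zero wsq_zero)
  then show "(\<lambda>(h,\<alpha>). (lift v \<alpha> (ind {h}), lift v \<alpha> (ind {h}))) w \<in> R11d"
    using we Zsum_ind[OF hs] by (simp add: R11d_def R2_def)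
  show "val ((\<lambda>(h,\<alpha>). (lift v \<alpha> (ind {h}), lift v \<alpha> (ind {h}))) w) =
     (\<lambda>(h,\<alpha>). of_nat (Suc q * multinom q \<alpha> * (Suc q * multinom q \<alpha>)) * (z h * cnj (z h)) * (\<Prod>i\<in>UNIV. xc i ^ \<alpha> i)) w"
    using we val_lift[OF hs hs, of \<alpha> \<alpha>] multinom_lift1[OF hs h(2)] by (simp add: G0_diag)
next
  fix ab assume ab: "ab \<in> R11d"
  obtain a b where abe: "ab = (a,b)" by (cases ab)
  have ab2: "(a,b) \<in> R2" "sum a Z = 1" "a \<circ> v = b \<circ> v" using ab abe by (auto simp: R11d_def)
  note S = R11_struct[OF ab2(1,2)]
  have "(\<lambda>i. int (a (v i)) - int (b (v i))) = (\<lambda>i. 0)" using ab2(3) by (auto simp: fun_eq_iff o_def dest: fun_cong)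
  then have "hp a = hp b" using S(7) by (simp add: piZ_zero)
  then have "b = a" using S(3,4) ab2(3) by metis
  then show "(\<lambda>(h,\<alpha>). (lift v \<alpha> (ind {h}), lift v \<alpha> (ind {h}))) ((\<lambda>ab. (hp (fst ab), fst ab \<circ> v)) ab) = ab"
    using abe S(3) by simp
  show "(\<lambda>ab. (hp (fst ab), fst ab \<circ> v)) ab \<in> Z \<times> K q" using abe S(1,5) by (simp add: K_def)
qed

lemma sum_R11d': "(\<Sum>ab\<in>R11d. val ab) = of_real (real ((q+1)^2) * Apoly q xi) * (\<Sum>k\<in>Z. z k * cnj (z k))"
proof -
  have "(\<Sum>ab\<in>R11d. val ab) = (\<Sum>h\<in>Z. \<Sum>\<alpha>\<in>K q. (z h * cnj (z h)) * (of_nat (Suc q * multinom q \<alpha> * (Suc q * multinom q \<alpha>)) * (\<Prod>i\<in>UNIV. xc i ^ \<alpha> i)))"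
    unfolding sum_R11d sum.cartesian_product by (simp add: mult_ac)
  also have "\<dots> = (\<Sum>h\<in>Z. (z h * cnj (z h)) * (\<Sum>\<alpha>\<in>K q. of_nat (Suc q * multinom q \<alpha> * (Suc q * multinom q \<alpha>)) * (\<Prod>i\<in>UNIV. xc i ^ \<alpha> i)))"
    by (rule sum.cong[OF refl]) (simp only: sum_distrib_left)
  also have "\<dots> = (\<Sum>k\<in>Z. z k * cnj (z k)) * (\<Sum>\<alpha>\<in>K q. of_nat (Suc q * multinom q \<alpha> * (Suc q * multinom q \<alpha>)) * (\<Prod>i\<in>UNIV. xc i ^ \<alpha> i))"
    by (simp only: sum_distrib_right)
  also have "(\<Sum>\<alpha>\<in>K q. of_nat (Suc q * multinom q \<alpha> * (Suc q * multinom q \<alpha>)) * (\<Prod>i\<in>UNIV. xc i ^ \<alpha> i)) = of_real (real ((q+1)^2) * Apoly q xi)"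
    unfolding Apoly_def K_Apoly by (simp add: sum_distrib_left xc_def, rule sum.cong[OF refl], simp add: algebra_simps power2_eq_square)
  finally show ?thesis by (simp add: mult.commute)
qed

end


lemma eta_m2: "eta (\<lambda>j. if j = i then -2 else 0 :: int) = -2"
  unfolding eta_def by simp

context L begin

lemma sum_pn_a: "(\<Sum>i\<in>UNIV. a i + posp l i) = n \<Longrightarrow> sum (\<lambda>i. posp l i + a i) UNIV = n"
  by (simp add: add.commute)

lemma sum_neg_a: "eta l = e \<Longrightarrow> int (sum (\<lambda>i. negp l i + a i) UNIV) = int (sum (\<lambda>i. posp l i + a i) UNIV) - e"
  using eta_pn[of l] by (simp add: sum.distrib)

lemma diff_pn: "(\<lambda>i. int (posp l i + a i) - int (negp l i + a i)) = l"
  using posp_negp[of l] by (auto simp: fun_eq_iff)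

lemma sum_R11o: "(\<Sum>(l,a,hk)\<in>W0. of_real (M0 l a) * cis (lx l x) * (z (fst hk) * cnj (z (snd hk)))) = (\<Sum>ab\<in>R11o. val ab)"
proof (rule sum.reindex_bij_witness[where j="\<lambda>(l,a,hk). (lift v (\<lambda>i. posp l i + a i) (ind {fst hk}), lift v (\<lambda>i. negp l i + a i) (ind {snd hk}))"
      and i="\<lambda>ab. ((\<lambda>i. int (fst ab (v i)) - int (snd ab (v i))), (\<lambda>i. min (fst ab (v i)) (snd ab (v i))), (hp (fst ab), hp (snd ab)))"])
  fix w assume w: "w \<in> W0"
  obtain l a h k where we: "w = (l,a,(h,k))" by (cases w) auto
  have l: "l \<in> Xq q" "eta l = 0" "l \<noteq> (\<lambda>i. 0)" using w we by (auto simp: W0_def Xq0_def Xq_def)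
  have a: "sum (\<lambda>i. posp l i + a i) UNIV = q" using w we by (auto simp: W0_def A0_def intro: sum_pn_a)
  have hk: "h \<in> Z" "k \<in> Z" "piZ v l + h - k = 0" "wsq v l + nsq h - nsq k = 0"
    using w we by (auto simp: W0_def P0'_def P0_def)
  have b0: "int (sum (\<lambda>i. negp l i + a i) UNIV) = int (sum (\<lambda>i. posp l i + a i) UNIV) - 0"
    by (rule sum_neg_a[OF l(2)])
  have b: "sum (\<lambda>i. negp l i + a i) UNIV = q" using b0 a by (metis diff_zero of_nat_eq_iff)
  have hs: "{h} \<subseteq> Z" "{k} \<subseteq> Z" using hk by auto
  show "(\<lambda>ab. ((\<lambda>i. int (fst ab (v i)) - int (snd ab (v i))), (\<lambda>i. min (fst ab (v i)) (snd ab (v i))), (hp (fst ab), hp (snd ab))))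
      ((\<lambda>(l,a,hk). (lift v (\<lambda>i. posp l i + a i) (ind {fst hk}), lift v (\<lambda>i. negp l i + a i) (ind {snd hk}))) w) = w"
    using we hp_lift[OF hk(1)] hp_lift[OF hk(2)] diff_pn[of l a] by (simp add: min_pn)
  have rm: "(lift v (\<lambda>i. posp l i + a i) (ind {h}), lift v (\<lambda>i. negp l i + a i) (ind {k})) \<in> RM q F"
    unfolding RM_lift[OF hs] diff_pn using a b hk by simp
  have ne: "(\<lambda>i. posp l i + a i) \<noteq> (\<lambda>i. negp l i + a i)"
  proof
    assume "(\<lambda>i. posp l i + a i) = (\<lambda>i. negp l i + a i)"
    then have "l = (\<lambda>i. 0)" using diff_pn[of l a] by (metis diff_self)
    then show False using l(3) by simp
  qed
  show "(\<lambda>(l,a,hk). (lift v (\<lambda>i. posp l i + a i) (ind {fst hk}), lift v (\<lambda>i. negp l i + a i) (ind {snd hk}))) w \<in> R11o"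
    using we rm ne Zsum_ind[OF hs(1)] Zsum_ind[OF hs(2)] by (simp add: R11o_def R2_def)
  show "val ((\<lambda>(l,a,hk). (lift v (\<lambda>i. posp l i + a i) (ind {fst hk}), lift v (\<lambda>i. negp l i + a i) (ind {snd hk}))) w) =
      (\<lambda>(l,a,hk). of_real (M0 l a) * cis (lx l x) * (z (fst hk) * cnj (z (snd hk)))) w"
  proof -
    have "val (lift v (\<lambda>i. posp l i + a i) (ind {h}), lift v (\<lambda>i. negp l i + a i) (ind {k})) =
       of_nat (Suc q * multinom q (\<lambda>i. posp l i + a i) * (Suc q * multinom q (\<lambda>i. negp l i + a i))) *
       ((\<Prod>x\<in>{h}. z x) * (\<Prod>x\<in>{k}. cnj (z x))) * (of_real (xihalf xi l * (\<Prod>i\<in>UNIV. xi i ^ a i)) * cis (lx l x))"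
      unfolding val_lift[OF hs] multinom_lift1[OF hs(1) a, unfolded Suc_eq_plus1]
        multinom_lift1[OF hs(2) b, unfolded Suc_eq_plus1] G0_pn Suc_eq_plus1 ..
    note vv = this
    show ?thesis unfolding we prod.case fst_conv snd_conv vv by (simp add: M0_def algebra_simps power2_eq_square)
  qed
next
  fix ab assume ab: "ab \<in> R11o"
  obtain A B where abe: "ab = (A,B)" by (cases ab)
  have ab2: "(A,B) \<in> R2" "sum A Z = 1" "A \<circ> v \<noteq> B \<circ> v" using ab abe by (auto simp: R11o_def)
  note S = R11_struct[OF ab2(1,2)]
  define l where "l = (\<lambda>i. int (A (v i)) - int (B (v i)))"
  have pA: "posp l i + min (A (v i)) (B (v i)) = A (v i)" and pB: "negp l i + min (A (v i)) (B (v i)) = B (v i)" for i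
    using pn_diff[OF l_def] by auto
  show "(\<lambda>(l,a,hk). (lift v (\<lambda>i. posp l i + a i) (ind {fst hk}), lift v (\<lambda>i. negp l i + a i) (ind {snd hk})))
     ((\<lambda>ab. ((\<lambda>i. int (fst ab (v i)) - int (snd ab (v i))), (\<lambda>i. min (fst ab (v i)) (snd ab (v i))), (hp (fst ab), hp (snd ab)))) ab) = ab"
  proof -
    have e1: "(\<lambda>i. posp (\<lambda>i. int (A (v i)) - int (B (v i))) i + min (A (v i)) (B (v i))) = A \<circ> v"
      using pA unfolding l_def by (auto simp: fun_eq_iff)
    have e2: "(\<lambda>i. negp (\<lambda>i. int (A (v i)) - int (B (v i))) i + min (A (v i)) (B (v i))) = B \<circ> v"
      using pB unfolding l_def by (auto simp: fun_eq_iff)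
    show ?thesis unfolding abe prod.case fst_conv snd_conv e1 e2 using S(3,4) by metis
  qed
  have et: "eta l = 0" unfolding l_def eta_diff[of "A \<circ> v" "B \<circ> v", simplified o_def] using S(5,6) by (simp add: o_def)
  have l0: "l \<noteq> (\<lambda>i. 0)"
  proof
    assume "l = (\<lambda>i. 0)"
    then have "A \<circ> v = B \<circ> v" unfolding l_def by (auto simp: fun_eq_iff dest: fun_cong)
    then show False using ab2(3) by simp
  qed
  have "l \<in> Xq q"
  proof (rule inXq[of "A \<circ> v" "B \<circ> v"])
    show "sum (A \<circ> v) UNIV + sum (B \<circ> v) UNIV = 2 * q" using S(5,6) by simp
    show "l = (\<lambda>i. int ((A \<circ> v) i) - int ((B \<circ> v) i))" unfolding l_def by simp
    show "\<forall>i. l \<noteq> (\<lambda>j. if j = i then -2 else 0)"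
    proof (intro allI notI)
      fix i assume "l = (\<lambda>j. if j = i then -2 else 0)"
      then have "eta l = -2" using eta_m2[of i] by simp
      then show False using et by simp
    qed
  qed (use l0 et in auto)
  then have lX: "l \<in> Xq0 q" using et by (simp add: Xq0_def)
  have aA: "(\<lambda>i. min (A (v i)) (B (v i))) \<in> A0 l"
    using S(5) pA unfolding A0_def by (simp add: add.commute o_def)
  have hP: "(hp A, hp B) \<in> P0' l"
    using S(1,2,7,8) ZSc' unfolding P0'_def P0_def l_def by auto
  show "(\<lambda>ab. ((\<lambda>i. int (fst ab (v i)) - int (snd ab (v i))), (\<lambda>i. min (fst ab (v i)) (snd ab (v i))), (hp (fst ab), hp (snd ab)))) ab \<in> W0"
    using abe lX aA hP unfolding l_def W0_def by simp
qed

end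


context L begin

lemma supp_Z_ind: "p \<subseteq> Z \<Longrightarrow> {k \<in> Z. lift v \<alpha> (ind p) k \<noteq> 0} = p"
  using Zdisj by (auto simp: lift_Z ind_def split: if_splits)

lemma two_side:
  assumes rm: "(a,b) \<in> RM q F" and sa: "sum a Z = 2" and sb: "sum b Z = 0"
  shows "\<exists>h k. h \<noteq> k \<and> h \<in> Z \<and> k \<in> Z \<and> (\<forall>j\<in>Z. a j = ind {h,k} j)"
proof -
  have r: "(\<Sum>i\<in>UNIV. a (v i)) + sum a Z = q+1" "(\<Sum>i\<in>UNIV. b (v i)) + sum b Z = q+1"
    "piZ v (\<lambda>i. int (a (v i)) - int (b (v i))) + (\<Sum>k\<in>Z. (int (a k) - int (b k)) *s k) = 0"
    "wsq v (\<lambda>i. int (a (v i)) - int (b (v i))) + (\<Sum>k\<in>Z. (int (a k) - int (b k)) * nsq k) = 0"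
    using rm unfolding RM_iff by blast+
  have bz: "\<forall>k\<in>Z. b k = 0" using sb finZ by simp
  from sum_two_Z[OF finZ sa] show ?thesis
  proof
    assume "\<exists>h\<in>Z. \<forall>k\<in>Z. a k = (if k = h then 2 else 0)"
    then obtain h where h: "h \<in> Z" "\<forall>k\<in>Z. a k = (if k = h then 2 else 0)" by blast
    have m: "(\<Sum>k\<in>Z. (int (a k) - int (b k)) *s k) = 2 *s h"
    proof -
      have "(\<Sum>k\<in>Z. (int (a k) - int (b k)) *s k) = (\<Sum>k\<in>Z. (if k = h then 2 else 0) *s k)"
        by (rule sum.cong) (use h bz in auto)
      then show ?thesis using sum_delta_Zs[OF h(1), of 2] by simp
    qed
    have e: "(\<Sum>k\<in>Z. (int (a k) - int (b k)) * nsq k) = 2 * nsq h"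
    proof -
      have "(\<Sum>k\<in>Z. (int (a k) - int (b k)) * nsq k) = (\<Sum>k\<in>Z. (if k = h then 2 else 0) * nsq k)"
        by (rule sum.cong) (use h bz in auto)
      then show ?thesis using sum_delta_Z[OF h(1), of 2 nsq] by simp
    qed
    have False
      by (rule no_double[of "a \<circ> v" "b \<circ> v" h]) (use r sa sb h(1) m e in auto)
    then show ?thesis ..
  next
    assume "\<exists>h\<in>Z. \<exists>k\<in>Z. h \<noteq> k \<and> (\<forall>j\<in>Z. a j = (if j \<in> {h,k} then 1 else 0))"
    then obtain h k where hk: "h \<in> Z" "k \<in> Z" "h \<noteq> k" "\<forall>j\<in>Z. a j = (if j \<in> {h,k} then 1 else 0)" by blast
    show ?thesis by (rule exI[of _ h], rule exI[of _ k]) (use hk in \<open>simp add: ind_def\<close>)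
  qed
qed

lemma two_side':
  assumes rm: "(a,b) \<in> RM q F" and sa: "sum a Z = 0" and sb: "sum b Z = 2"
  shows "\<exists>h k. h \<noteq> k \<and> h \<in> Z \<and> k \<in> Z \<and> (\<forall>j\<in>Z. b j = ind {h,k} j)"
proof -
  have r: "(\<Sum>i\<in>UNIV. a (v i)) + sum a Z = q+1" "(\<Sum>i\<in>UNIV. b (v i)) + sum b Z = q+1"
    "piZ v (\<lambda>i. int (a (v i)) - int (b (v i))) + (\<Sum>k\<in>Z. (int (a k) - int (b k)) *s k) = 0"
    "wsq v (\<lambda>i. int (a (v i)) - int (b (v i))) + (\<Sum>k\<in>Z. (int (a k) - int (b k)) * nsq k) = 0"
    using rm unfolding RM_iff by blast+
  have az: "\<forall>k\<in>Z. a k = 0" using sa finZ by simp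
  have neg: "(\<lambda>i. int (b (v i)) - int (a (v i))) = (\<lambda>i. - (int (a (v i)) - int (b (v i))))" by auto
  from sum_two_Z[OF finZ sb] show ?thesis
  proof
    assume "\<exists>h\<in>Z. \<forall>k\<in>Z. b k = (if k = h then 2 else 0)"
    then obtain h where h: "h \<in> Z" "\<forall>k\<in>Z. b k = (if k = h then 2 else 0)" by blast
    have m: "(\<Sum>k\<in>Z. (int (a k) - int (b k)) *s k) = (-2) *s h"
    proof -
      have "(\<Sum>k\<in>Z. (int (a k) - int (b k)) *s k) = (\<Sum>k\<in>Z. (if k = h then -2 else 0) *s k)"
        by (rule sum.cong) (use h az in auto)
      then show ?thesis using sum_delta_Zs[OF h(1), of "-2"] by simp
    qed
    have e: "(\<Sum>k\<in>Z. (int (a k) - int (b k)) * nsq k) = -2 * nsq h"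
    proof -
      have "(\<Sum>k\<in>Z. (int (a k) - int (b k)) * nsq k) = (\<Sum>k\<in>Z. (if k = h then -2 else 0) * nsq k)"
        by (rule sum.cong) (use h az in auto)
      then show ?thesis using sum_delta_Z[OF h(1), of "-2" nsq] by simp
    qed
    have p1: "piZ v (\<lambda>i. int (b (v i)) - int (a (v i))) + 2 *s h = 0"
      unfolding neg piZ_neg using r(3) m by (simp add: vec_eq_iff algebra_simps)
    have p2: "wsq v (\<lambda>i. int (b (v i)) - int (a (v i))) + 2 * nsq h = 0"
      unfolding neg wsq_neg using r(4) e by simp
    have False
      by (rule no_double[of "b \<circ> v" "a \<circ> v" h]) (use r sa sb h(1) p1 p2 in auto)
    then show ?thesis ..
  next
    assume "\<exists>h\<in>Z. \<exists>k\<in>Z. h \<noteq> k \<and> (\<forall>j\<in>Z. b j = (if j \<in> {h,k} then 1 else 0))"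
    then obtain h k where hk: "h \<in> Z" "k \<in> Z" "h \<noteq> k" "\<forall>j\<in>Z. b j = (if j \<in> {h,k} then 1 else 0)" by blast
    show ?thesis by (rule exI[of _ h], rule exI[of _ k]) (use hk in \<open>simp add: ind_def\<close>)
  qed
qed

lemma R20_struct:
  assumes ab: "(a,b) \<in> R2" "sum a Z = 2"
  shows "\<exists>h k. h \<noteq> k \<and> h \<in> Z \<and> k \<in> Z \<and> a = lift v (a \<circ> v) (ind {h,k}) \<and> b = lift v (b \<circ> v) (ind {})
    \<and> sum (a \<circ> v) UNIV = q - 1 \<and> sum (b \<circ> v) UNIV = q + 1
    \<and> piZ v (\<lambda>i. int (a (v i)) - int (b (v i))) + h + k = 0
    \<and> wsq v (\<lambda>i. int (a (v i)) - int (b (v i))) + nsq h + nsq k = 0"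
proof -
  have rm: "(a,b) \<in> RM q F" and sb: "sum b Z = 0" using ab by (auto simp: R2_def)
  obtain h k where hk: "h \<noteq> k" "h \<in> Z" "k \<in> Z" "\<forall>j\<in>Z. a j = ind {h,k} j" using two_side[OF rm ab(2) sb] by blast
  have sp: "\<forall>k. k \<notin> F \<longrightarrow> a k = 0" using rm by (simp add: RM_iff)
  have pZ: "{h,k} \<subseteq> Z" using hk by auto
  have ea: "a = lift v (a \<circ> v) (ind {h,k})" by (rule decomp_ind[OF sp pZ hk(4)])
  have eb: "b = lift v (b \<circ> v) (ind {})" using supp_zero_Z'[OF rm sb] by simp
  define \<alpha> where "\<alpha> = a \<circ> v"
  define \<beta> where "\<beta> = b \<circ> v"
  have "(lift v \<alpha> (ind {h,k}), lift v \<beta> (ind {})) \<in> RM q F" using rm ea eb unfolding \<alpha>_def \<beta>_def by metis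
  then have r: "sum \<alpha> UNIV + 2 = q+1" "sum \<beta> UNIV = q+1"
    "piZ v (\<lambda>i. int (\<alpha> i) - int (\<beta> i)) + h + k = 0"
    "wsq v (\<lambda>i. int (\<alpha> i) - int (\<beta> i)) + nsq h + nsq k = 0"
    unfolding RM_lift[OF pZ empty_subsetI] using hk(1) by (auto simp: add.assoc)
  show ?thesis
    by (rule exI[of _ h], rule exI[of _ k]) (use hk ea eb r in \<open>auto simp: \<alpha>_def \<beta>_def\<close>)
qed

lemma R02_struct:
  assumes ab: "(a,b) \<in> R2" "sum a Z = 0"
  shows "\<exists>h k. h \<noteq> k \<and> h \<in> Z \<and> k \<in> Z \<and> b = lift v (b \<circ> v) (ind {h,k}) \<and> a = lift v (a \<circ> v) (ind {})
    \<and> sum (b \<circ> v) UNIV = q - 1 \<and> sum (a \<circ> v) UNIV = q + 1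
    \<and> piZ v (\<lambda>i. int (b (v i)) - int (a (v i))) + h + k = 0
    \<and> wsq v (\<lambda>i. int (b (v i)) - int (a (v i))) + nsq h + nsq k = 0"
proof -
  have rm: "(a,b) \<in> RM q F" and sb: "sum b Z = 2" using ab by (auto simp: R2_def)
  obtain h k where hk: "h \<noteq> k" "h \<in> Z" "k \<in> Z" "\<forall>j\<in>Z. b j = ind {h,k} j" using two_side'[OF rm ab(2) sb] by blast
  have sp: "\<forall>k. k \<notin> F \<longrightarrow> b k = 0" using rm by (simp add: RM_iff)
  have pZ: "{h,k} \<subseteq> Z" using hk by auto
  have eb: "b = lift v (b \<circ> v) (ind {h,k})" by (rule decomp_ind[OF sp pZ hk(4)])
  have ea: "a = lift v (a \<circ> v) (ind {})" using supp_zero_Z[OF rm ab(2)] by simp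
  define \<alpha> where "\<alpha> = a \<circ> v"
  define \<beta> where "\<beta> = b \<circ> v"
  have "(lift v \<alpha> (ind {}), lift v \<beta> (ind {h,k})) \<in> RM q F" using rm ea eb unfolding \<alpha>_def \<beta>_def by metis
  then have r: "sum \<alpha> UNIV = q+1" "sum \<beta> UNIV + 2 = q+1"
    "piZ v (\<lambda>i. int (\<alpha> i) - int (\<beta> i)) - (h + k) = 0"
    "wsq v (\<lambda>i. int (\<alpha> i) - int (\<beta> i)) - (nsq h + nsq k) = 0"
    unfolding RM_lift[OF empty_subsetI pZ] using hk(1) by (auto simp: algebra_simps)
  have neg: "(\<lambda>i. int (\<beta> i) - int (\<alpha> i)) = (\<lambda>i. - (int (\<alpha> i) - int (\<beta> i)))" by auto
  have r3: "piZ v (\<lambda>i. int (\<beta> i) - int (\<alpha> i)) + h + k = 0"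
    unfolding neg piZ_neg using r(3) by (simp add: vec_eq_iff algebra_simps)
  have r4: "wsq v (\<lambda>i. int (\<beta> i) - int (\<alpha> i)) + nsq h + nsq k = 0"
    unfolding neg wsq_neg using r(4) by simp
  show ?thesis
    by (rule exI[of _ h], rule exI[of _ k]) (use hk ea eb r r3 r4 in \<open>auto simp: \<alpha>_def \<beta>_def\<close>)
qed

end


context L begin

lemma G0_np: "G (\<lambda>i. negp l i + a i) (\<lambda>i. posp l i + a i) 0 =
   of_real (xihalf xi l * (\<Prod>i\<in>UNIV. xi i ^ a i)) * cis (- lx l x)"
proof -
  have "(\<Prod>i\<in>UNIV. sqrt (xi i) ^ (negp l i + a i + (posp l i + a i))) = xihalf xi l * (\<Prod>i\<in>UNIV. xi i ^ a i)"
    unfolding xihalf_def prod.distrib[symmetric]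
  proof (rule prod.cong[OF refl])
    fix i
    have e: "negp l i + a i + (posp l i + a i) = (posp l i + negp l i) + a i + a i" by simp
    show "sqrt (xi i) ^ (negp l i + a i + (posp l i + a i)) = xi i powr (real (posp l i + negp l i) / 2) * xi i ^ a i"
      unfolding e by (rule sqrt_pow_split) (use xipos in auto)
  qed
  moreover have "(\<Sum>i\<in>UNIV. (real (negp l i + a i) - real (posp l i + a i)) * x i) = - lx l x"
    unfolding lx_def sum_negf[symmetric]
  proof (rule sum.cong[OF refl])
    fix i
    have "real (negp l i + a i) - real (posp l i + a i) = - real_of_int (l i)"
      by (cases "l i \<ge> 0") (auto simp: posp_def negp_def)
    then show "(real (negp l i + a i) - real (posp l i + a i)) * x i = - (real_of_int (l i) * x i)" by simp
  qed
  ultimately show ?thesis unfolding G0 by simp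
qed

lemma W2_facts:
  assumes "(l,a,p) \<in> W2"
  shows "\<exists>h k. p = {h,k} \<and> h \<noteq> k \<and> h \<in> Z \<and> k \<in> Z \<and> piZ v l + h + k = 0 \<and> wsq v l + nsq h + nsq k = 0"
    "eta l = -2" "sum (\<lambda>i. posp l i + a i) UNIV = q - 1" "sum (\<lambda>i. negp l i + a i) UNIV = q + 1"
proof -
  show "\<exists>h k. p = {h,k} \<and> h \<noteq> k \<and> h \<in> Z \<and> k \<in> Z \<and> piZ v l + h + k = 0 \<and> wsq v l + nsq h + nsq k = 0"
    using assms by (auto simp: W2_def P2'_def P2_def)
  show et: "eta l = -2" using assms by (simp add: W2_def Xq2_def)
  show a: "sum (\<lambda>i. posp l i + a i) UNIV = q - 1" using assms by (auto simp: W2_def A2_def intro: sum_pn_a)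
  have "int (sum (\<lambda>i. negp l i + a i) UNIV) = int (sum (\<lambda>i. posp l i + a i) UNIV) - (-2)"
    by (rule sum_neg_a[OF et])
  also have "\<dots> = int (q + 1)" unfolding a using q1 by simp
  finally show "sum (\<lambda>i. negp l i + a i) UNIV = q + 1" by (simp only: of_nat_eq_iff)
qed

lemma sum_pair: "h \<noteq> k \<Longrightarrow> sum (\<lambda>j. j) {h,k} = h + k" "h \<noteq> k \<Longrightarrow> sum nsq {h,k} = nsq h + nsq k"
  by simp_all

lemma multinom_q1: "multinom (q+1) (lift v \<beta> (ind {})) = multinom (q+1) \<beta>"
  by (simp add: multinom_lift0)

lemma sum_R20: "(\<Sum>(l,a,p)\<in>W2. of_real (M2 l a) * (cis (lx l x) * (\<Prod>h\<in>p. z h))) = (\<Sum>ab\<in>R20. val ab)"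
proof (rule sum.reindex_bij_witness[where j="\<lambda>(l,a,p). (lift v (\<lambda>i. posp l i + a i) (ind p), lift v (\<lambda>i. negp l i + a i) (ind {}))"
      and i="\<lambda>ab. ((\<lambda>i. int (fst ab (v i)) - int (snd ab (v i))), (\<lambda>i. min (fst ab (v i)) (snd ab (v i))), {k \<in> Z. fst ab k \<noteq> 0})"])
  fix w assume w: "w \<in> W2"
  obtain l a p where we: "w = (l,a,p)" by (cases w) auto
  note W = W2_facts[OF w[unfolded we]]
  obtain h k where hk: "p = {h,k}" "h \<noteq> k" "h \<in> Z" "k \<in> Z" "piZ v l + h + k = 0" "wsq v l + nsq h + nsq k = 0"
    using W(1) by blast
  have pZ: "p \<subseteq> Z" using hk by auto
  show "(\<lambda>ab. ((\<lambda>i. int (fst ab (v i)) - int (snd ab (v i))), (\<lambda>i. min (fst ab (v i)) (snd ab (v i))), {k \<in> Z. fst ab k \<noteq> 0}))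
      ((\<lambda>(l,a,p). (lift v (\<lambda>i. posp l i + a i) (ind p), lift v (\<lambda>i. negp l i + a i) (ind {}))) w) = w"
    using we supp_Z_ind[OF pZ] diff_pn[of l a] by (simp add: min_pn)
  have rm: "(lift v (\<lambda>i. posp l i + a i) (ind p), lift v (\<lambda>i. negp l i + a i) (ind {})) \<in> RM q F"
    unfolding RM_lift[OF pZ empty_subsetI] diff_pn using W(3,4) hk q1 by (simp add: add.assoc)
  show "(\<lambda>(l,a,p). (lift v (\<lambda>i. posp l i + a i) (ind p), lift v (\<lambda>i. negp l i + a i) (ind {}))) w \<in> R20"
    using we rm Zsum_ind[OF pZ] Zsum_ind[OF empty_subsetI] hk by (simp add: R20_def R2_def)
  show "val ((\<lambda>(l,a,p). (lift v (\<lambda>i. posp l i + a i) (ind p), lift v (\<lambda>i. negp l i + a i) (ind {}))) w) =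
      (\<lambda>(l,a,p). of_real (M2 l a) * (cis (lx l x) * (\<Prod>h\<in>p. z h))) w"
  proof -
    have qq: "Suc (Suc (q - 1)) = q + 1" "Suc (q - 1) = q" using q1 by auto
    have "val (lift v (\<lambda>i. posp l i + a i) (ind p), lift v (\<lambda>i. negp l i + a i) (ind {})) =
       of_nat ((q + 1) * q * multinom (q - 1) (\<lambda>i. posp l i + a i) * multinom (q+1) (\<lambda>i. negp l i + a i)) *
       ((\<Prod>x\<in>p. z x) * (\<Prod>x\<in>{}. cnj (z x))) * (of_real (xihalf xi l * (\<Prod>i\<in>UNIV. xi i ^ a i)) * cis (lx l x))"
      unfolding val_lift[OF pZ empty_subsetI] multinom_lift2[OF pZ W(3), unfolded qq(1), unfolded qq(2)] multinom_q1 G0_pn ..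
    note vv = this
    show ?thesis unfolding we prod.case vv by (simp add: M2_def algebra_simps)
  qed
next
  fix ab assume ab: "ab \<in> R20"
  obtain A B where abe: "ab = (A,B)" by (cases ab)
  have ab2: "(A,B) \<in> R2" "sum A Z = 2" using ab abe by (auto simp: R20_def)
  obtain h k where S: "h \<noteq> k" "h \<in> Z" "k \<in> Z" "A = lift v (A \<circ> v) (ind {h,k})" "B = lift v (B \<circ> v) (ind {})"
    "sum (A \<circ> v) UNIV = q - 1" "sum (B \<circ> v) UNIV = q + 1"
    "piZ v (\<lambda>i. int (A (v i)) - int (B (v i))) + h + k = 0"
    "wsq v (\<lambda>i. int (A (v i)) - int (B (v i))) + nsq h + nsq k = 0"
    using R20_struct[OF ab2] by blast
  define l where "l = (\<lambda>i. int (A (v i)) - int (B (v i)))"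
  define \<alpha> where "\<alpha> = A \<circ> v"
  define \<beta> where "\<beta> = B \<circ> v"
  have eA: "A = lift v \<alpha> (ind {h,k})" using S(4) unfolding \<alpha>_def .
  have eB: "B = lift v \<beta> (ind {})" using S(5) unfolding \<beta>_def .
  have pZ: "{h,k} \<subseteq> Z" using S by auto
  have supp: "{j \<in> Z. A j \<noteq> 0} = {h,k}" unfolding eA by (rule supp_Z_ind[OF pZ])
  have pA: "posp l i + min (A (v i)) (B (v i)) = A (v i)" and pB: "negp l i + min (A (v i)) (B (v i)) = B (v i)" for i
    using pn_diff[OF l_def] by auto
  show "(\<lambda>(l,a,p). (lift v (\<lambda>i. posp l i + a i) (ind p), lift v (\<lambda>i. negp l i + a i) (ind {})))
     ((\<lambda>ab. ((\<lambda>i. int (fst ab (v i)) - int (snd ab (v i))), (\<lambda>i. min (fst ab (v i)) (snd ab (v i))), {k \<in> Z. fst ab k \<noteq> 0})) ab) = ab"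
  proof -
    have e1: "(\<lambda>i. posp (\<lambda>i. int (A (v i)) - int (B (v i))) i + min (A (v i)) (B (v i))) = \<alpha>"
      using pA unfolding l_def \<alpha>_def by (auto simp: fun_eq_iff)
    have e2: "(\<lambda>i. negp (\<lambda>i. int (A (v i)) - int (B (v i))) i + min (A (v i)) (B (v i))) = \<beta>"
      using pB unfolding l_def \<beta>_def by (auto simp: fun_eq_iff)
    show ?thesis unfolding abe prod.case fst_conv snd_conv e1 e2 supp using eA eB by simp
  qed
  have sa: "sum \<alpha> UNIV = q - 1" "sum \<beta> UNIV = q + 1" using S(6,7) by (simp_all add: \<alpha>_def \<beta>_def)
  have ldef: "l = (\<lambda>i. int (\<alpha> i) - int (\<beta> i))" unfolding l_def \<alpha>_def \<beta>_def by simp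
  have et: "eta l = -2" unfolding ldef eta_diff using sa q1 by simp
  have l0: "l \<noteq> (\<lambda>i. 0)" using et by (auto simp: eta_def)
  have "l \<in> Xq q"
  proof (rule inXq[of \<alpha> \<beta>])
    show "sum \<alpha> UNIV + sum \<beta> UNIV = 2 * q" using sa q1 by simp
    show "\<forall>i. l \<noteq> (\<lambda>j. if j = i then -2 else 0)" using not_m2[OF S(1)] S(8,9) unfolding l_def by blast
  qed (use ldef l0 et in auto)
  then have lX: "l \<in> Xq2 q" using et by (simp add: Xq2_def)
  have aA: "(\<lambda>i. min (A (v i)) (B (v i))) \<in> A2 l"
    using S(6) pA unfolding A2_def by (simp add: add.commute o_def)
  have hP: "{h,k} \<in> P2' l"
    using S(1,2,3,8,9) ZSc' pZ unfolding P2'_def P2_def l_def by blast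
  show "(\<lambda>ab. ((\<lambda>i. int (fst ab (v i)) - int (snd ab (v i))), (\<lambda>i. min (fst ab (v i)) (snd ab (v i))), {k \<in> Z. fst ab k \<noteq> 0})) ab \<in> W2"
    using abe lX aA hP supp unfolding l_def W2_def by simp
qed

lemma sum_R02: "(\<Sum>(l,a,p)\<in>W2. of_real (M2 l a) * (cis (- lx l x) * (\<Prod>h\<in>p. cnj (z h)))) = (\<Sum>ab\<in>R02. val ab)"
proof (rule sum.reindex_bij_witness[where j="\<lambda>(l,a,p). (lift v (\<lambda>i. negp l i + a i) (ind {}), lift v (\<lambda>i. posp l i + a i) (ind p))"
      and i="\<lambda>ab. ((\<lambda>i. int (snd ab (v i)) - int (fst ab (v i))), (\<lambda>i. min (snd ab (v i)) (fst ab (v i))), {k \<in> Z. snd ab k \<noteq> 0})"])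
  fix w assume w: "w \<in> W2"
  obtain l a p where we: "w = (l,a,p)" by (cases w) auto
  note W = W2_facts[OF w[unfolded we]]
  obtain h k where hk: "p = {h,k}" "h \<noteq> k" "h \<in> Z" "k \<in> Z" "piZ v l + h + k = 0" "wsq v l + nsq h + nsq k = 0"
    using W(1) by blast
  have pZ: "p \<subseteq> Z" using hk by auto
  show "(\<lambda>ab. ((\<lambda>i. int (snd ab (v i)) - int (fst ab (v i))), (\<lambda>i. min (snd ab (v i)) (fst ab (v i))), {k \<in> Z. snd ab k \<noteq> 0}))
      ((\<lambda>(l,a,p). (lift v (\<lambda>i. negp l i + a i) (ind {}), lift v (\<lambda>i. posp l i + a i) (ind p))) w) = w"
    using we supp_Z_ind[OF pZ] diff_pn[of l a] by (simp add: min_pn)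
  have neg: "(\<lambda>i. int (negp l i + a i) - int (posp l i + a i)) = (\<lambda>i. - l i)"
    using posp_negp[of l] by (auto simp: fun_eq_iff algebra_simps)
  have m1: "piZ v l + (h + k) = 0" using hk(5) by (simp add: add.assoc)
  have m2: "- piZ v l + sum (\<lambda>j. j) {} - sum (\<lambda>j. j) p = 0"
  proof -
    have "- piZ v l + sum (\<lambda>j. j) {} - sum (\<lambda>j. j) p = - (piZ v l + (h + k))" using hk(1,2) by simp
    then show ?thesis using m1 by simp
  qed
  have rm: "(lift v (\<lambda>i. negp l i + a i) (ind {}), lift v (\<lambda>i. posp l i + a i) (ind p)) \<in> RM q F"
    unfolding RM_lift[OF empty_subsetI pZ] neg piZ_neg wsq_neg using W(3,4) hk q1 m2
    by simp
  show "(\<lambda>(l,a,p). (lift v (\<lambda>i. negp l i + a i) (ind {}), lift v (\<lambda>i. posp l i + a i) (ind p))) w \<in> R02"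
    using we rm Zsum_ind[OF pZ] Zsum_ind[OF empty_subsetI] hk by (simp add: R02_def R2_def)
  show "val ((\<lambda>(l,a,p). (lift v (\<lambda>i. negp l i + a i) (ind {}), lift v (\<lambda>i. posp l i + a i) (ind p))) w) =
      (\<lambda>(l,a,p). of_real (M2 l a) * (cis (- lx l x) * (\<Prod>h\<in>p. cnj (z h)))) w"
  proof -
    have qq: "Suc (Suc (q - 1)) = q + 1" "Suc (q - 1) = q" using q1 by auto
    have "val (lift v (\<lambda>i. negp l i + a i) (ind {}), lift v (\<lambda>i. posp l i + a i) (ind p)) =
       of_nat (multinom (q+1) (\<lambda>i. negp l i + a i) * ((q + 1) * q * multinom (q - 1) (\<lambda>i. posp l i + a i))) *
       ((\<Prod>x\<in>{}. z x) * (\<Prod>x\<in>p. cnj (z x))) * (of_real (xihalf xi l * (\<Prod>i\<in>UNIV. xi i ^ a i)) * cis (- lx l x))"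
      unfolding val_lift[OF empty_subsetI pZ] multinom_lift2[OF pZ W(3), unfolded qq(1), unfolded qq(2)] multinom_q1 G0_np ..
    note vv = this
    show ?thesis unfolding we prod.case vv by (simp add: M2_def algebra_simps)
  qed
next
  fix ab assume ab: "ab \<in> R02"
  obtain A B where abe: "ab = (A,B)" by (cases ab)
  have ab2: "(A,B) \<in> R2" "sum A Z = 0" using ab abe by (auto simp: R02_def)
  obtain h k where S: "h \<noteq> k" "h \<in> Z" "k \<in> Z" "B = lift v (B \<circ> v) (ind {h,k})" "A = lift v (A \<circ> v) (ind {})"
    "sum (B \<circ> v) UNIV = q - 1" "sum (A \<circ> v) UNIV = q + 1"
    "piZ v (\<lambda>i. int (B (v i)) - int (A (v i))) + h + k = 0"
    "wsq v (\<lambda>i. int (B (v i)) - int (A (v i))) + nsq h + nsq k = 0"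
    using R02_struct[OF ab2] by blast
  define l where "l = (\<lambda>i. int (B (v i)) - int (A (v i)))"
  define \<alpha> where "\<alpha> = A \<circ> v"
  define \<beta> where "\<beta> = B \<circ> v"
  have eB: "B = lift v \<beta> (ind {h,k})" using S(4) unfolding \<beta>_def .
  have eA: "A = lift v \<alpha> (ind {})" using S(5) unfolding \<alpha>_def .
  have pZ: "{h,k} \<subseteq> Z" using S by auto
  have supp: "{j \<in> Z. B j \<noteq> 0} = {h,k}" unfolding eB by (rule supp_Z_ind[OF pZ])
  have pB: "posp l i + min (B (v i)) (A (v i)) = B (v i)" and pA: "negp l i + min (B (v i)) (A (v i)) = A (v i)" for i
    using pn_diff[OF l_def] by auto
  show "(\<lambda>(l,a,p). (lift v (\<lambda>i. negp l i + a i) (ind {}), lift v (\<lambda>i. posp l i + a i) (ind p)))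
     ((\<lambda>ab. ((\<lambda>i. int (snd ab (v i)) - int (fst ab (v i))), (\<lambda>i. min (snd ab (v i)) (fst ab (v i))), {k \<in> Z. snd ab k \<noteq> 0})) ab) = ab"
  proof -
    have e1: "(\<lambda>i. posp (\<lambda>i. int (B (v i)) - int (A (v i))) i + min (B (v i)) (A (v i))) = \<beta>"
      using pB unfolding l_def \<beta>_def by (auto simp: fun_eq_iff)
    have e2: "(\<lambda>i. negp (\<lambda>i. int (B (v i)) - int (A (v i))) i + min (B (v i)) (A (v i))) = \<alpha>"
      using pA unfolding l_def \<alpha>_def by (auto simp: fun_eq_iff)
    show ?thesis unfolding abe prod.case fst_conv snd_conv e1 e2 supp using eA eB by simp
  qed
  have sa: "sum \<beta> UNIV = q - 1" "sum \<alpha> UNIV = q + 1" using S(6,7) by (simp_all add: \<alpha>_def \<beta>_def)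
  have ldef: "l = (\<lambda>i. int (\<beta> i) - int (\<alpha> i))" unfolding l_def \<alpha>_def \<beta>_def by simp
  have et: "eta l = -2" unfolding ldef eta_diff using sa q1 by simp
  have l0: "l \<noteq> (\<lambda>i. 0)" using et by (auto simp: eta_def)
  have "l \<in> Xq q"
  proof (rule inXq[of \<beta> \<alpha>])
    show "sum \<beta> UNIV + sum \<alpha> UNIV = 2 * q" using sa q1 by simp
    show "\<forall>i. l \<noteq> (\<lambda>j. if j = i then -2 else 0)" using not_m2[OF S(1)] S(8,9) unfolding l_def by blast
  qed (use ldef l0 et in auto)
  then have lX: "l \<in> Xq2 q" using et by (simp add: Xq2_def)
  have aA: "(\<lambda>i. min (B (v i)) (A (v i))) \<in> A2 l"
    using S(6) pB unfolding A2_def by (simp add: add.commute o_def)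
  have hP: "{h,k} \<in> P2' l"
    using S(1,2,3,8,9) ZSc' pZ unfolding P2'_def P2_def l_def by blast
  show "(\<lambda>ab. ((\<lambda>i. int (snd ab (v i)) - int (fst ab (v i))), (\<lambda>i. min (snd ab (v i)) (fst ab (v i))), {k \<in> Z. snd ab k \<noteq> 0})) ab \<in> W2"
    using abe lX aA hP supp unfolding l_def W2_def by simp
qed

lemma E2': "(\<Sum>ab\<in>R2. val ab) = of_real (real ((q+1)^2) * Apoly q xi) * (\<Sum>k\<in>Z. z k * cnj (z k)) + Qform q v xi x z"
  unfolding R2_split sum_R11d' Qform_split sum_R11o sum_R20 sum_R02 by (simp add: add.assoc)

end


context L begin


lemma deriv_A: "deriv (\<lambda>t. Apoly (q+1) (xi(i := t))) (xi i) =
   (\<Sum>\<alpha>\<in>K (q+1). real (multinom (q+1) \<alpha>)^2 * (real (\<alpha> i) * xi i ^ (\<alpha> i - 1) * (\<Prod>j\<in>UNIV-{i}. xi j ^ \<alpha> j)))"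
proof -
  have eq: "Apoly (q+1) (xi(i := t)) = (\<Sum>\<alpha>\<in>K (q+1). real (multinom (q+1) \<alpha>)^2 * (t ^ \<alpha> i * (\<Prod>j\<in>UNIV-{i}. xi j ^ \<alpha> j)))" for t
  proof -
    have "(\<Prod>j\<in>UNIV. (xi(i := t)) j ^ \<alpha> j) = t ^ \<alpha> i * (\<Prod>j\<in>UNIV-{i}. xi j ^ \<alpha> j)" for \<alpha> :: "'m \<Rightarrow> nat"
      by (subst prod.remove[of _ i]) (auto intro!: prod.cong)
    then show ?thesis unfolding Apoly_def K_Apoly by simp
  qed
  have "((\<lambda>t. Apoly (q+1) (xi(i := t))) has_real_derivative
     (\<Sum>\<alpha>\<in>K (q+1). real (multinom (q+1) \<alpha>)^2 * (real (\<alpha> i) * xi i ^ (\<alpha> i - 1) * (\<Prod>j\<in>UNIV-{i}. xi j ^ \<alpha> j)))) (at (xi i))"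
    unfolding eq by (auto intro!: derivative_eq_intros simp: mult_ac)
  then show ?thesis by (rule DERIV_imp_deriv)
qed

lemma E1: "(\<Sum>\<alpha>\<in>K (q+1). of_nat (multinom (q+1) \<alpha> ^ 2) *
       (\<Sum>i\<in>UNIV. (of_nat (\<alpha> i) * xc i ^ (\<alpha> i - 1) * (2 * y i)) * (\<Prod>j\<in>UNIV-{i}. xc j ^ \<alpha> j)))
   = 2 * (\<Sum>i\<in>UNIV. of_real (deriv (\<lambda>t. Apoly (q+1) (xi(i := t))) (xi i)) * y i)"
proof -
  have "(\<Sum>i\<in>UNIV. of_real (deriv (\<lambda>t. Apoly (q+1) (xi(i := t))) (xi i)) * y i) =
    (\<Sum>i\<in>UNIV. \<Sum>\<alpha>\<in>K (q+1). of_nat (multinom (q+1) \<alpha> ^ 2) *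
       ((of_nat (\<alpha> i) * xc i ^ (\<alpha> i - 1) * y i) * (\<Prod>j\<in>UNIV-{i}. xc j ^ \<alpha> j)))"
    unfolding deriv_A by (simp add: sum_distrib_right sum_distrib_left xc_def mult_ac)
  also have "\<dots> = (\<Sum>\<alpha>\<in>K (q+1). \<Sum>i\<in>UNIV. of_nat (multinom (q+1) \<alpha> ^ 2) *
       ((of_nat (\<alpha> i) * xc i ^ (\<alpha> i - 1) * y i) * (\<Prod>j\<in>UNIV-{i}. xc j ^ \<alpha> j)))"
    by (rule sum.swap)
  finally show ?thesis by (simp add: sum_distrib_left mult_ac)
qed

definition "Cf = (\<Sum>i\<in>UNIV. real_of_int (nsq (v i)) * xi i) + Apoly (q+1) xi"

lemma main:
  "(let f = Hsub q v xi x y z;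
           Z = {k. z k \<noteq> 0}
       in deriv f 0 = 0
        \<and> f 0 + deriv f 0 + (deriv ^^ 2) f 0 / 2 =
            of_real Cf
          + of_real (real ((q+1)^2) * Apoly q xi) * ((\<Sum>i\<in>UNIV. y i) + (\<Sum>k\<in>Z. z k * cnj (z k)))
          + (\<Sum>i\<in>UNIV. of_real (omega q v xi i) * y i)
          + (\<Sum>k\<in>Z. of_int (nsq k) * z k * cnj (z k))
          + Qform q v xi x z)"
proof -
  let ?f = "Hsub q v xi x y z"
  note d = D2_deriv[OF D2_f]
  let ?A = "of_real (real ((q+1)^2) * Apoly q xi) :: complex"
  let ?D = "(\<Sum>i\<in>UNIV. of_real (deriv (\<lambda>t. Apoly (q+1) (xi(i := t))) (xi i)) * y i) :: complex"
  let ?N = "(\<Sum>i\<in>UNIV. of_int (nsq (v i)) * y i) :: complex"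
  let ?W = "(\<Sum>k\<in>Z. of_int (nsq k) * (z k * cnj (z k))) :: complex"
  let ?S = "(\<Sum>k\<in>Z. z k * cnj (z k)) :: complex"
  have c0: "?f 0 = of_real Cf"
    unfolding d(1) Cf_def Apoly_def K_Apoly by (simp add: xc_def)
  have n2: "(\<Sum>i\<in>UNIV. of_int (nsq (v i)) * (2 * y i)) = 2 * ?N" by (simp add: sum_distrib_left mult_ac)
  have c2: "(deriv ^^ 2) ?f 0 / 2 = ?N + ?W + ?D + ?A * ?S + Qform q v xi x z"
    unfolding d(3) E1 E2' n2 by (simp add: field_simps)
  have om: "(\<Sum>i\<in>UNIV. of_real (omega q v xi i) * y i) = ?N + ?D - ?A * (\<Sum>i\<in>UNIV. y i)"
  proof -
    have "(\<Sum>i\<in>UNIV. of_real (omega q v xi i) * y i) = (\<Sum>i\<in>UNIV. of_int (nsq (v i)) * y i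
       + of_real (deriv (\<lambda>t. Apoly (q+1) (xi(i := t))) (xi i)) * y i - ?A * y i)"
      unfolding omega_def by (simp add: algebra_simps)
    also have "\<dots> = ?N + ?D - ?A * (\<Sum>i\<in>UNIV. y i)"
      by (simp add: sum.distrib sum_subtractf sum_distrib_left)
    finally show ?thesis .
  qed
  have zz: "(\<Sum>k\<in>Z. of_int (nsq k) * z k * cnj (z k)) = ?W" by (simp add: mult_ac)
  show ?thesis unfolding Let_def Z_def[symmetric] d(2) c0 om zz
    using c2 by (simp add: algebra_simps)
qed

end

theorem mainTheorem5:
  fixes v :: "'m::finite \<Rightarrow> int^'n" and q :: nat
  assumes q1: "q \<ge> 1"
    and dist: "inj v"
    and H1: "\<forall>nn::'m \<Rightarrow> int. (\<Sum>i\<in>UNIV. nn i) = 0 \<and> 1 < (\<Sum>i\<in>UNIV. \<bar>nn i\<bar>)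
               \<and> (\<Sum>i\<in>UNIV. \<bar>nn i\<bar>) \<le> 2*int q + 2 \<longrightarrow> piZ v nn \<noteq> 0"
    and H2: "\<forall>nn::'m \<Rightarrow> int. (\<Sum>i\<in>UNIV. nn i) = 1 \<and> 1 < (\<Sum>i\<in>UNIV. \<bar>nn i\<bar>)
               \<and> (\<Sum>i\<in>UNIV. \<bar>nn i\<bar>) \<le> 2*int q + 1 \<longrightarrow> nsq (piZ v nn) - wsq v nn \<noteq> 0"
    and H3: "\<forall>u::'m \<Rightarrow> int. (u \<in> Xq q \<or> (\<exists>a\<in>Xq q. \<exists>b\<in>Xq q. a \<noteq> b \<and> (u = (\<lambda>i. a i + b i) \<or> u = (\<lambda>i. a i - b i))))
               \<longrightarrow> piZ v u \<noteq> 0"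
    and H4: "\<forall>l\<in>Xq2 q. 2 * wsq v l + nsq (piZ v l) \<noteq> 0"
  shows "\<exists>C :: ('m \<Rightarrow> real) \<Rightarrow> real.
    \<forall>xi x y z. (\<forall>i. xi i > 0) \<and> (\<forall>i. norm (y i) < xi i)
      \<and> finite {k. z k \<noteq> 0} \<and> {k. z k \<noteq> 0} \<subseteq> Sc v \<longrightarrow>
      (let f = Hsub q v xi x y z;
           Z = {k. z k \<noteq> 0}
       in deriv f 0 = 0
        \<and> f 0 + deriv f 0 + (deriv ^^ 2) f 0 / 2 =
            of_real (C xi)
          + of_real (real ((q+1)^2) * Apoly q xi) * ((\<Sum>i\<in>UNIV. y i) + (\<Sum>k\<in>Z. z k * cnj (z k)))
          + (\<Sum>i\<in>UNIV. of_real (omega q v xi i) * y i)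
          + (\<Sum>k\<in>Z. of_int (nsq k) * z k * cnj (z k))
          + Qform q v xi x z)"
proof (rule exI[of _ "\<lambda>xi. (\<Sum>i\<in>UNIV. real_of_int (nsq (v i)) * xi i) + Apoly (q+1) xi"], intro allI impI)
  fix xi x :: "'m \<Rightarrow> real" and y :: "'m \<Rightarrow> complex" and z :: "int^'n \<Rightarrow> complex"
  assume a: "(\<forall>i. xi i > 0) \<and> (\<forall>i. norm (y i) < (xi::'m \<Rightarrow> real) i) \<and> finite {k. z k \<noteq> 0} \<and> {k. z k \<noteq> 0} \<subseteq> Sc v"
  interpret L v q xi x y z
    by unfold_locales (use assms a in auto)
  show "let f = Hsub q v xi x y z; Z = {k. z k \<noteq> 0}
       in deriv f 0 = 0
        \<and> f 0 + deriv f 0 + (deriv ^^ 2) f 0 / 2 =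
            of_real ((\<lambda>xi. (\<Sum>i\<in>UNIV. real_of_int (nsq (v i)) * xi i) + Apoly (q+1) xi) xi)
          + of_real (real ((q+1)^2) * Apoly q xi) * ((\<Sum>i\<in>UNIV. y i) + (\<Sum>k\<in>Z. z k * cnj (z k)))
          + (\<Sum>i\<in>UNIV. of_real (omega q v xi i) * y i)
          + (\<Sum>k\<in>Z. of_int (nsq k) * z k * cnj (z k))
          + Qform q v xi x z"
    using main unfolding Cf_def by simp
qed


end
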